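(* Let $x=p/q$ with $\gcd(p,q)=1$, $q\in\mathbb N$, and let $\{y_n\}_{n\in\mathbb N}$ be positive numbers. (1) If $y_n=c/n^2$ for a constant $c>0$, then for any $m\in\mathbb N_q$ and any $\Psi\in C_c^\infty(\mathcal M)$, $$\lim_{\substack{n\to\infty\\ \gcd(n,q)=1}}\delta^{\rm pr}_{n,x,y_n}(\Psi)=\mu_{\frac{1}{cq^2}}(\Psi)\quad\text{and}\quad \lim_{\substack{n\to\infty\\ n\in\mathbb P_m}}\delta_{n,x,y_n}(\Psi)=\nu_{m,\frac{\gcd(m,q)^2}{cq^2}}(\Psi).$$ (2) If $\lim_{n\to\infty}n^2y_n=0$, then both sequences $\{\mathcal R_n(x,y_n)\}_{n\in\mathbb N}$ and $\{\mathcal R_n^{\rm pr}(x,y_n)\}_{n\in\mathbb N}$ fully escape to the cusp of $\mathcal M$, i.e. for every compact $K\subset\mathcal M$, $\mathcal R_n(x,y_n)\cap K=\emptyset$ (and hence $\mathcal R^{\rm pr}_n(x,y_n)\cap K=\emptyset$) for all sufficiently large $n$.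
   Context: $\mathcal M=\Gamma\backslash\mathbb H$ with $\Gamma=\mathrm{SL}_2(\mathbb Z)$. For $n\in\mathbb N$, $x\in\mathbb R/\mathbb Z$, $y>0$: $\mathcal R_n(x,y)=\{\Gamma(x+\tfrac jn+iy):0\le j\le n-1\}$, $\mathcal R^{\rm pr}_n(x,y)=\{\Gamma(x+\tfrac jn+iy):j\in(\mathbb Z/n\mathbb Z)^\times\}$; $\delta_{n,x,y}(\Psi)=\frac1n\sum_{j=0}^{n-1}\Psi(\Gamma(x+\tfrac jn+iy))$, $\delta^{\rm pr}_{n,x,y}(\Psi)=\frac1{\varphi(n)}\sum_{j\in(\mathbb Z/n\mathbb Z)^\times}\Psi(\Gamma(x+\tfrac jn+iy))$. $\mathbb N_q=\{n\in\mathbb N:\gcd(n^2,q)\mid n\}$. For $m\in\mathbb N$, $\mathbb P_m=\{n=m\ell:\ \ell\text{ prime},\ \ell\nmid m\}$. For $Y>0$, $\mu_Y$ is the uniform probability measure on the closed horocycle $\{\Gamma(t+iY):t\in\mathbb R/\mathbb Z\}$, i.e. $\mu_Y(\Psi)=\int_0^1\Psi(t+iY)\,dt$, and $\nu_{m,Y}=\frac1m\sum_{d\mid m}\varphi(\tfrac md)\mu_{d^2Y}$. *)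

theory Defs
  imports "HOL-Analysis.Analysis" "HOL-Number_Theory.Number_Theory"
begin

definition upper :: "complex set" where
  "upper = {z. Im z > 0}"

definition SL2Z :: "(int \<times> int \<times> int \<times> int) set" where
  "SL2Z = {(a, b, c, d). a * d - b * c = 1}"

definition moeb :: "int \<times> int \<times> int \<times> int \<Rightarrow> complex \<Rightarrow> complex" where
  "moeb g z = (case g of (a, b, c, d) \<Rightarrow>
      (of_int a * z + of_int b) / (of_int c * z + of_int d))"

text \<open>Gamma-saturation of a subset of the upper half-plane (preimage in H of its image in M).\<close>
definition gamma_orbit :: "complex set \<Rightarrow> complex set" where
  "gamma_orbit C = {moeb g z | g z. g \<in> SL2Z \<and> z \<in> C}"

text \<open>Functions on M are Gamma-invariant functions on H.\<close>
definition gamma_invariant :: "(complex \<Rightarrow> complex) \<Rightarrow> bool" where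
  "gamma_invariant f \<longleftrightarrow> (\<forall>g\<in>SL2Z. \<forall>z\<in>upper. f (moeb g z) = f z)"

text \<open>C-infinity on H (viewed as an open subset of R^2): there is a family of functions containing f,
  all continuous on H, closed under taking the partial derivatives in the directions 1 and i.\<close>
definition smooth_on_upper :: "(complex \<Rightarrow> complex) \<Rightarrow> bool" where
  "smooth_on_upper f \<longleftrightarrow> (\<exists>F. f \<in> F \<and> (\<forall>g\<in>F. continuous_on upper g) \<and>
      (\<forall>g\<in>F. \<forall>v\<in>{1, \<i>}. \<exists>g'\<in>F. \<forall>z\<in>upper.
          ((\<lambda>t::real. g (z + of_real t * v)) has_vector_derivative g' z) (at 0)))"

text \<open>Psi in C_c^infinity(M): Gamma-invariant, smooth, and its support lies in the image in M of a
  compact subset of H (i.e. has compact support in M).\<close>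
definition Cc_smooth_M :: "(complex \<Rightarrow> complex) \<Rightarrow> bool" where
  "Cc_smooth_M f \<longleftrightarrow> gamma_invariant f \<and> smooth_on_upper f \<and>
      (\<exists>C. compact C \<and> C \<subseteq> upper \<and> (\<forall>z\<in>upper. f z \<noteq> 0 \<longrightarrow> z \<in> gamma_orbit C))"

definition delta :: "nat \<Rightarrow> real \<Rightarrow> real \<Rightarrow> (complex \<Rightarrow> complex) \<Rightarrow> complex" where
  "delta n x y f = (1 / of_nat n) * (\<Sum>j<n. f (Complex (x + real j / real n) y))"

definition delta_pr :: "nat \<Rightarrow> real \<Rightarrow> real \<Rightarrow> (complex \<Rightarrow> complex) \<Rightarrow> complex" where
  "delta_pr n x y f = (1 / of_nat (totient n)) *
      (\<Sum>j\<in>{j. j < n \<and> coprime j n}. f (Complex (x + real j / real n) y))"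

definition mu :: "real \<Rightarrow> (complex \<Rightarrow> complex) \<Rightarrow> complex" where
  "mu Y f = integral {0..1} (\<lambda>t. f (Complex t Y))"

definition nu :: "nat \<Rightarrow> real \<Rightarrow> (complex \<Rightarrow> complex) \<Rightarrow> complex" where
  "nu m Y f = (1 / of_nat m) *
      (\<Sum>d\<in>{d. d dvd m}. of_nat (totient (m div d)) * mu (real d ^ 2 * Y) f)"

definition Nq :: "nat \<Rightarrow> nat set" where
  "Nq q = {n. n \<ge> 1 \<and> gcd (n ^ 2) q dvd n}"

definition Pm :: "nat \<Rightarrow> nat set" where
  "Pm m = {m * l | l. prime l \<and> \<not> l dvd m}"

text \<open>Representatives in H of the points of R_n(x,y) and R^pr_n(x,y).\<close>
definition Rn :: "nat \<Rightarrow> real \<Rightarrow> real \<Rightarrow> complex set" where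
  "Rn n x y = {Complex (x + real j / real n) y | j. j < n}"

definition Rn_pr :: "nat \<Rightarrow> real \<Rightarrow> real \<Rightarrow> complex set" where
  "Rn_pr n x y = {Complex (x + real j / real n) y | j. j < n \<and> coprime j n}"

text \<open>A sequence of finite subsets of M fully escapes to the cusp: for every compact K in M
  (= image of a compact C in H) the sets are eventually disjoint from K.\<close>
definition escapes_to_cusp :: "(nat \<Rightarrow> complex set) \<Rightarrow> bool" where
  "escapes_to_cusp R \<longleftrightarrow> (\<forall>C. compact C \<and> C \<subseteq> upper \<longrightarrow>
      (\<forall>\<^sub>F n in sequentially. gamma_orbit (R n) \<inter> gamma_orbit C = {}))"

end

theory Submission
  imports Defs
begin


lemma Im_moeb:
  fixes a b c d :: int
  shows "Im (moeb (a,b,c,d) z) = of_int (a*d - b*c) * Im z / (cmod (of_int c * z + of_int d))^2"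
proof -
  obtain r y where z: "z = Complex r y" by (metis complex_surj)
  have "(cmod (of_int c * z + of_int d))^2 = (of_int c * r + of_int d)^2 + (of_int c * y)^2"
    unfolding cmod_power2 z by simp
  thus ?thesis unfolding moeb_def z
    by (simp add: Im_divide power2_eq_square algebra_simps)
qed

lemma moeb_den_nz:
  assumes "(a,b,c,d) \<in> SL2Z" "Im z > 0"
  shows "of_int c * z + of_int d \<noteq> 0"
proof
  assume h: "of_int c * z + of_int d = 0"
  hence "Im (of_int c * z + of_int d) = 0" by simp
  hence "c = 0" using assms(2) by simp
  with h have "d = 0" by simp
  with \<open>c = 0\<close> assms(1) show False by (simp add: SL2Z_def)
qed

lemma Im_moeb_SL:
  assumes "(a,b,c,d) \<in> SL2Z"
  shows "Im (moeb (a,b,c,d) z) = Im z / (cmod (of_int c * z + of_int d))^2"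
  using assms Im_moeb[of a b c d z] by (simp add: SL2Z_def)

lemma moeb_upper:
  assumes "g \<in> SL2Z" "z \<in> upper"
  shows "moeb g z \<in> upper"
proof -
  obtain a b c d where g: "g = (a,b,c,d)" by (cases g) auto
  have "of_int c * z + of_int d \<noteq> 0" using moeb_den_nz assms g by (auto simp: upper_def)
  thus ?thesis using assms Im_moeb_SL[of a b c d z] g by (auto simp: upper_def)
qed

definition mmul :: "int \<times> int \<times> int \<times> int \<Rightarrow> int \<times> int \<times> int \<times> int \<Rightarrow> int \<times> int \<times> int \<times> int" where
  "mmul g h = (case g of (a,b,c,d) \<Rightarrow> case h of (a',b',c',d') \<Rightarrow>
     (a*a' + b*c', a*b' + b*d', c*a' + d*c', c*b' + d*d'))"

lemma mmul_SL: "g \<in> SL2Z \<Longrightarrow> h \<in> SL2Z \<Longrightarrow> mmul g h \<in> SL2Z"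
  by (cases g; cases h) (auto simp: SL2Z_def mmul_def algebra_simps)

lemma moeb_mmul:
  assumes "g \<in> SL2Z" "h \<in> SL2Z" "z \<in> upper"
  shows "moeb g (moeb h z) = moeb (mmul g h) z"
proof -
  obtain a b c d where g: "g = (a,b,c,d)" by (cases g) auto
  obtain a' b' c' d' where h: "h = (a',b',c',d')" by (cases h) auto
  have n1: "of_int c' * z + of_int d' \<noteq> 0" using moeb_den_nz assms h by (auto simp: upper_def)
  have hz: "moeb h z \<in> upper" using moeb_upper assms by auto
  have n2: "of_int c * moeb h z + of_int d \<noteq> 0" using moeb_den_nz assms g hz by (auto simp: upper_def)
  have key: "\<And>u v :: complex. v \<noteq> 0 \<Longrightarrow> (of_int a * (u / v) + of_int b) / (of_int c * (u / v) + of_int d) = (of_int a * u + of_int b * v) / (of_int c * u + of_int d * v)"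
  proof -
    fix u v :: complex assume "v \<noteq> 0"
    have "of_int a * (u / v) + of_int b = (of_int a * u + of_int b * v) / v" using \<open>v \<noteq> 0\<close> by (simp add: field_simps)
    moreover have "of_int c * (u / v) + of_int d = (of_int c * u + of_int d * v) / v" using \<open>v \<noteq> 0\<close> by (simp add: field_simps)
    ultimately show "(of_int a * (u / v) + of_int b) / (of_int c * (u / v) + of_int d) = (of_int a * u + of_int b * v) / (of_int c * u + of_int d * v)"
      using \<open>v \<noteq> 0\<close> by simp
  qed
  have "moeb g (moeb h z) = (of_int a * (of_int a' * z + of_int b') + of_int b * (of_int c' * z + of_int d')) /
      (of_int c * (of_int a' * z + of_int b') + of_int d * (of_int c' * z + of_int d'))"
    unfolding g h moeb_def using key[OF n1] by simp
  also have "\<dots> = moeb (mmul g h) z" unfolding g h moeb_def mmul_def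
    by (simp add: algebra_simps)
  finally show ?thesis .
qed

definition minv :: "int \<times> int \<times> int \<times> int \<Rightarrow> int \<times> int \<times> int \<times> int" where
  "minv g = (case g of (a,b,c,d) \<Rightarrow> (d, -b, -c, a))"

lemma minv_SL: "g \<in> SL2Z \<Longrightarrow> minv g \<in> SL2Z"
  by (cases g) (auto simp: SL2Z_def minv_def algebra_simps)

lemma moeb_minv:
  assumes "g \<in> SL2Z" "z \<in> upper"
  shows "moeb (minv g) (moeb g z) = z"
proof -
  have "moeb (minv g) (moeb g z) = moeb (mmul (minv g) g) z"
    using assms minv_SL moeb_mmul by blast
  also have "mmul (minv g) g = (1,0,0,1)" using assms
    by (cases g) (auto simp: SL2Z_def minv_def mmul_def algebra_simps)
  finally show ?thesis by (simp add: moeb_def)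
qed

lemma orbit_meet:
  assumes "gamma_orbit A \<inter> gamma_orbit B \<noteq> {}" "A \<subseteq> upper" "B \<subseteq> upper"
  shows "\<exists>h\<in>SL2Z. \<exists>z\<in>A. \<exists>w\<in>B. w = moeb h z"
proof -
  obtain g1 z g2 w where *: "g1 \<in> SL2Z" "z \<in> A" "g2 \<in> SL2Z" "w \<in> B" "moeb g1 z = moeb g2 w"
    using assms(1) unfolding gamma_orbit_def by blast
  have "w \<in> upper" using * assms by auto
  hence "w = moeb (minv g2) (moeb g2 w)" using moeb_minv * by auto
  also have "\<dots> = moeb (minv g2) (moeb g1 z)" using * by simp
  also have "\<dots> = moeb (mmul (minv g2) g1) z" using moeb_mmul minv_SL * assms by blast
  finally show ?thesis using * mmul_SL minv_SL by blast
qed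

lemma moeb_translate: "moeb (1, k, 0, 1) z = z + of_int k"
  by (simp add: moeb_def)

lemma translate_SL: "(1, k, 0, 1) \<in> SL2Z" by (simp add: SL2Z_def)

lemma inv_point:
  fixes a' b' A B :: int and y :: real
  assumes "b' > 0" "y > 0" "A * a' + B * b' = -1"
  shows "moeb (A, B, b', -a') (Complex (of_int a' / of_int b') y) = Complex (of_int A / of_int b') (1 / (of_int b'^2 * y))"
    and "(A, B, b', -a') \<in> SL2Z"
proof -
  define z where "z = Complex (of_int a' / of_int b') y"
  define w where "w = Complex (of_int A / of_int b') (1 / (of_int b'^2 * y))"
  have bz: "of_int b' * z - of_int a' = \<i> * of_real (of_int b' * y)"
    using assms by (simp add: z_def complex_eq_iff)
  have nz: "of_int b' * z - of_int a' \<noteq> 0" using bz assms by simp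
  have "of_int A * z + of_int B = w * (of_int b' * z - of_int a')"
  proof -
    have e: "real_of_int A * real_of_int a' + real_of_int B * real_of_int b' = -1"
      using assms(3) by (metis of_int_add of_int_minus of_int_mult of_int_1)
    show ?thesis unfolding bz using assms e
      by (simp add: z_def w_def complex_eq_iff field_simps power2_eq_square)
  qed
  hence "moeb (A, B, b', -a') z = w" unfolding moeb_def using nz
    by (simp add: field_simps)
  thus "moeb (A, B, b', -a') (Complex (of_int a' / of_int b') y) = Complex (of_int A / of_int b') (1 / (of_int b'^2 * y))"
    by (simp add: z_def w_def)
  show "(A, B, b', -a') \<in> SL2Z" using assms by (simp add: SL2Z_def algebra_simps)
qed


lemma Im_bound:
  fixes a bb c d A' B' :: int and y :: real
  assumes h: "(a,bb,c,d) \<in> SL2Z" and B': "B' > 0" and y: "y > 0"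
  shows "Im (moeb (a,bb,c,d) (Complex (of_int A' / of_int B') y)) \<le> y * of_int B'^2 \<or>
         Im (moeb (a,bb,c,d) (Complex (of_int A' / of_int B') y)) \<ge> 1 / (of_int B'^2 * y)"
proof -
  define r where "r = of_int A' / (of_int B' :: real)"
  define z where "z = Complex r y"
  have nrm: "(cmod (of_int c * z + of_int d))^2 = (of_int c * r + of_int d)^2 + (of_int c * y)^2"
    unfolding cmod_power2 z_def by simp
  have Imf: "Im (moeb (a,bb,c,d) z) = y / (cmod (of_int c * z + of_int d))^2"
    using Im_moeb_SL[OF h] by (simp add: z_def)
  have pos: "(cmod (of_int c * z + of_int d))^2 > 0"
    using moeb_den_nz[OF h, of z] y by (simp add: z_def)
  define K where "K = c * A' + d * B'"
  have crd: "of_int c * r + of_int d = of_int K / of_int B'"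
    using B' by (simp add: r_def K_def field_simps)
  show ?thesis
  proof (cases "K = 0")
    case False
    hence "\<bar>of_int K\<bar> \<ge> (1::real)" by linarith
    hence "1 \<le> \<bar>of_int K :: real\<bar>^2" by (rule one_le_power)
    hence "(of_int K :: real)^2 \<ge> 1" by simp
    hence "(of_int c * r + of_int d)^2 \<ge> 1 / of_int B'^2" unfolding crd using B'
      by (simp add: power_divide divide_right_mono)
    moreover have "0 \<le> (of_int c * y)^2" by simp
    ultimately have "(cmod (of_int c * z + of_int d))^2 \<ge> 1 / of_int B'^2" unfolding nrm
      by linarith
    hence "y / (cmod (of_int c * z + of_int d))^2 \<le> y / (1 / of_int B'^2)"
      using y B' pos by (intro divide_left_mono) auto
    thus ?thesis using Imf by (simp add: z_def r_def)
  next
    case True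
    have det: "a * d - bb * c = 1" using h by (simp add: SL2Z_def)
    have c0: "c \<noteq> 0"
    proof
      assume "c = 0" with True B' have "d = 0" by (simp add: K_def)
      with \<open>c = 0\<close> det show False by simp
    qed
    have "gcd c d dvd a * d" by simp
    moreover have "gcd c d dvd bb * c" by simp
    ultimately have "gcd c d dvd a * d - bb * c" by (rule dvd_diff)
    hence "is_unit (gcd c d)" using det by simp
    hence cop: "coprime c d" by (simp only: is_unit_gcd)
    have "d * B' = - (c * A')" using True by (simp add: K_def)
    hence "c dvd d * B'" by simp
    hence "c dvd B'" using cop by (metis coprime_dvd_mult_right_iff)
    hence "\<bar>c\<bar> dvd B'" by simp
    hence "\<bar>c\<bar> \<le> B'" using B' by (rule zdvd_imp_le)
    hence cB: "(of_int c :: real)^2 \<le> of_int B'^2"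
      by (metis of_int_abs of_int_le_iff power2_abs power_mono abs_ge_zero)
    have "of_int c * r + of_int d = 0" using crd True by simp
    hence "(cmod (of_int c * z + of_int d))^2 = (of_int c)^2 * y^2" unfolding nrm by (simp add: power_mult_distrib)
    hence "Im (moeb (a,bb,c,d) z) = 1 / ((of_int c)^2 * y)" using Imf y by (simp add: power2_eq_square)
    moreover have "1 / ((of_int c)^2 * y) \<ge> 1 / (of_int B'^2 * y)"
      using cB y c0 by (intro divide_left_mono mult_right_mono mult_pos_pos) auto
    ultimately show ?thesis by (simp add: z_def r_def)
  qed
qed

lemma Rn_upper: "y > 0 \<Longrightarrow> Rn n x y \<subseteq> upper" by (auto simp: Rn_def upper_def)
lemma Rn_pr_sub: "Rn_pr n x y \<subseteq> Rn n x y" by (auto simp: Rn_def Rn_pr_def)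
lemma gamma_orbit_mono: "A \<subseteq> B \<Longrightarrow> gamma_orbit A \<subseteq> gamma_orbit B"
  unfolding gamma_orbit_def by blast

lemma escape_Rn:
  fixes p :: int and q :: nat and y :: "nat \<Rightarrow> real"
  assumes q: "q \<ge> 1" and ypos: "\<forall>n\<ge>1. y n > 0" and lim: "(\<lambda>n. real n ^ 2 * y n) \<longlonglongrightarrow> 0"
  shows "escapes_to_cusp (\<lambda>n. Rn n (real_of_int p / real q) (y n))"
  unfolding escapes_to_cusp_def
proof (intro allI impI)
  fix C assume C: "compact C \<and> C \<subseteq> upper"
  show "\<forall>\<^sub>F n in sequentially. gamma_orbit (Rn n (real_of_int p / real q) (y n)) \<inter> gamma_orbit C = {}"
  proof (cases "C = {}")
    case True thus ?thesis by (simp add: gamma_orbit_def)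
  next
    case False
    have ci: "compact (Im ` C)" using C by (intro compact_continuous_image continuous_intros) auto
    obtain w1 where w1: "w1 \<in> C" "\<forall>w\<in>C. Im w1 \<le> Im w"
      using compact_attains_inf[OF ci] False by auto
    obtain w2 where w2: "w2 \<in> C" "\<forall>w\<in>C. Im w \<le> Im w2"
      using compact_attains_sup[OF ci] False by auto
    define \<delta> where "\<delta> = Im w1"
    define \<Delta> where "\<Delta> = Im w2"
    have dpos: "\<delta> > 0" using w1 C by (auto simp: \<delta>_def upper_def)
    have Dpos: "\<Delta> > 0" using w2 C by (auto simp: \<Delta>_def upper_def)
    define \<epsilon> where "\<epsilon> = min \<delta> (1 / \<Delta>) / (real q)^2"
    have epos: "\<epsilon> > 0" using dpos Dpos q by (simp add: \<epsilon>_def)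
    have ev: "\<forall>\<^sub>F n in sequentially. real n ^ 2 * y n < \<epsilon>"
      using lim epos by (metis order_tendstoD(2))
    show ?thesis using ev eventually_ge_at_top[of 1]
    proof eventually_elim
      case (elim n)
      have yn: "y n > 0" using ypos elim by auto
      show ?case
      proof (rule ccontr)
        assume "gamma_orbit (Rn n (real_of_int p / real q) (y n)) \<inter> gamma_orbit C \<noteq> {}"
        then obtain h z w where hzw: "h \<in> SL2Z" "z \<in> Rn n (real_of_int p / real q) (y n)" "w \<in> C" "w = moeb h z"
          using orbit_meet[of _ C] Rn_upper[OF yn] C by blast
        obtain j where z: "z = Complex (real_of_int p / real q + real j / real n) (y n)"
          using hzw(2) by (auto simp: Rn_def)
        define A' where "A' = p * int n + int j * int q"
        define B' where "B' = int q * int n"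
        have B'pos: "B' > 0" using q elim by (simp add: B'_def)
        have zz: "z = Complex (of_int A' / of_int B') (y n)" unfolding z A'_def B'_def
          using q elim by (simp add: field_simps)
        obtain a bb c d where hh: "h = (a,bb,c,d)" by (cases h) auto
        have "Im w \<le> y n * of_int B'^2 \<or> Im w \<ge> 1 / (of_int B'^2 * y n)"
          using Im_bound[of a bb c d B' "y n" A'] hzw hh zz B'pos yn by simp
        moreover have e1: "y n * of_int B'^2 = real q ^2 * (real n ^ 2 * y n)" by (simp add: B'_def power_mult_distrib)
        moreover have e2: "real q ^2 * (real n ^ 2 * y n) < min \<delta> (1 / \<Delta>)"
          using elim q unfolding \<epsilon>_def by (simp add: field_simps)
        moreover have "\<delta> \<le> Im w" "Im w \<le> \<Delta>" using w1 w2 hzw by (auto simp: \<delta>_def \<Delta>_def)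
        moreover have pp: "real q ^2 * (real n ^ 2 * y n) > 0" using q elim yn by simp
        moreover have "1 / (of_int B'^2 * y n) > \<Delta>"
        proof -
          have "of_int B'^2 * y n < 1 / \<Delta>" using e1 e2 by (metis min_less_iff_conj mult.commute)
          hence "\<Delta> * (of_int B'^2 * y n) < 1" using Dpos by (simp add: field_simps)
          moreover have "of_int B'^2 * y n > 0" using yn B'pos by simp
          ultimately show ?thesis by (simp add: divide_simps mult.commute)
        qed
        ultimately show False by linarith
      qed
    qed
  qed
qed

lemma escape_Rn_pr:
  assumes "escapes_to_cusp (\<lambda>n. Rn n x (y n))"
  shows "escapes_to_cusp (\<lambda>n. Rn_pr n x (y n))"
  unfolding escapes_to_cusp_def
proof (intro allI impI)
  fix C assume "compact C \<and> C \<subseteq> upper"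
  hence "\<forall>\<^sub>F n in sequentially. gamma_orbit (Rn n x (y n)) \<inter> gamma_orbit C = {}"
    using assms unfolding escapes_to_cusp_def by blast
  thus "\<forall>\<^sub>F n in sequentially. gamma_orbit (Rn_pr n x (y n)) \<inter> gamma_orbit C = {}"
  proof (rule eventually_mono)
    fix n assume "gamma_orbit (Rn n x (y n)) \<inter> gamma_orbit C = {}"
    moreover have "gamma_orbit (Rn_pr n x (y n)) \<subseteq> gamma_orbit (Rn n x (y n))"
      by (rule gamma_orbit_mono[OF Rn_pr_sub])
    ultimately show "gamma_orbit (Rn_pr n x (y n)) \<inter> gamma_orbit C = {}" by blast
  qed
qed


lemma Psi_trans:
  assumes "gamma_invariant \<Psi>" "Y > 0"
  shows "\<Psi> (Complex (t + of_int k) Y) = \<Psi> (Complex t Y)"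
proof -
  have "Complex t Y \<in> upper" using assms by (simp add: upper_def)
  hence "\<Psi> (moeb (1,k,0,1) (Complex t Y)) = \<Psi> (Complex t Y)"
    using assms(1) translate_SL unfolding gamma_invariant_def by blast
  moreover have "moeb (1,k,0,1) (Complex t Y) = Complex (t + of_int k) Y"
    by (simp add: moeb_translate complex_eq_iff)
  ultimately show ?thesis by simp
qed

lemma Psi_cont: "Cc_smooth_M \<Psi> \<Longrightarrow> continuous_on upper \<Psi>"
  unfolding Cc_smooth_M_def smooth_on_upper_def by blast

lemma Psi_bdd:
  assumes "Cc_smooth_M \<Psi>"
  shows "\<exists>B\<ge>0. \<forall>z\<in>upper. norm (\<Psi> z) \<le> B"
proof -
  obtain C where C: "compact C" "C \<subseteq> upper" "\<forall>z\<in>upper. \<Psi> z \<noteq> 0 \<longrightarrow> z \<in> gamma_orbit C"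
    using assms unfolding Cc_smooth_M_def by blast
  have "continuous_on C \<Psi>" using Psi_cont[OF assms] C(2) continuous_on_subset by blast
  hence "compact (\<Psi> ` C)" using C(1) compact_continuous_image by blast
  then obtain B0 where B0: "\<forall>w\<in>C. norm (\<Psi> w) \<le> B0"
    using compact_imp_bounded bounded_iff by (metis image_eqI)
  have inv: "gamma_invariant \<Psi>" using assms unfolding Cc_smooth_M_def by blast
  show ?thesis
  proof (intro exI[of _ "max B0 0"] conjI ballI)
    show "0 \<le> max B0 0" by simp
    fix z assume z: "z \<in> upper"
    show "norm (\<Psi> z) \<le> max B0 0"
    proof (cases "\<Psi> z = 0")
      case False
      then obtain g w where gw: "g \<in> SL2Z" "w \<in> C" "z = moeb g w"
        using C(3) z unfolding gamma_orbit_def by blast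
      have "\<Psi> z = \<Psi> w" using inv gw C(2) unfolding gamma_invariant_def by blast
      thus ?thesis using B0 gw by fastforce
    qed simp
  qed
qed

lemma hline_cont:
  assumes "Cc_smooth_M \<Psi>" "Y > 0"
  shows "continuous_on UNIV (\<lambda>t. \<Psi> (Complex t Y))"
proof -
  have "continuous_on UNIV (\<lambda>t. Complex t Y)"
    by (intro continuous_intros)
  moreover have "(\<lambda>t. Complex t Y) ` UNIV \<subseteq> upper" using assms by (auto simp: upper_def)
  ultimately show ?thesis using Psi_cont[OF assms(1)] continuous_on_compose2 by blast
qed

lemma hline_lip:
  assumes "Cc_smooth_M \<Psi>" "Y > 0"
  shows "\<exists>L\<ge>0. \<forall>s t. \<bar>s - t\<bar> \<le> 1 \<longrightarrow> norm (\<Psi> (Complex s Y) - \<Psi> (Complex t Y)) \<le> L * \<bar>s - t\<bar>"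
proof -
  obtain Fam where Fam: "\<Psi> \<in> Fam" "\<forall>g\<in>Fam. continuous_on upper g"
    "\<forall>g\<in>Fam. \<forall>v\<in>{1, \<i>}. \<exists>g'\<in>Fam. \<forall>z\<in>upper.
          ((\<lambda>t::real. g (z + of_real t * v)) has_vector_derivative g' z) (at 0)"
    using assms(1) unfolding Cc_smooth_M_def smooth_on_upper_def by blast
  obtain g' where g': "g' \<in> Fam" "\<forall>z\<in>upper. ((\<lambda>t::real. \<Psi> (z + of_real t * 1)) has_vector_derivative g' z) (at 0)"
    using Fam by blast
  have gc: "continuous_on upper g'" using Fam g' by blast
  define S where "S = (\<lambda>t. Complex t Y) ` {-1..2}"
  have cS: "continuous_on UNIV (\<lambda>t. Complex t Y)"
    by (simp add: Complex_eq continuous_on_add continuous_on_const continuous_on_of_real_id continuous_on_mult)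
  have Sc: "compact S" unfolding S_def
    by (intro compact_continuous_image continuous_on_subset[OF cS]) auto
  have Su: "S \<subseteq> upper" using assms by (auto simp: S_def upper_def)
  have "compact (g' ` S)" using Sc Su gc compact_continuous_image continuous_on_subset by blast
  then obtain B0 where B0: "\<forall>w\<in>S. norm (g' w) \<le> B0"
    using compact_imp_bounded bounded_iff by (metis image_eqI)
  define B where "B = max B0 0"
  define F where "F = (\<lambda>t. \<Psi> (Complex t Y))"
  have der: "(F has_vector_derivative g' (Complex u Y)) (at u)" for u
  proof -
    have zu: "Complex u Y \<in> upper" using assms by (simp add: upper_def)
    have d1: "((\<lambda>t. t - u) has_vector_derivative 1) (at u)"
      by (auto intro!: derivative_eq_intros)
    have d2: "((\<lambda>t::real. \<Psi> (Complex u Y + of_real t * 1)) has_vector_derivative g' (Complex u Y)) (at ((\<lambda>t. t - u) u))"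
      using g'(2) zu by simp
    have "(((\<lambda>t::real. \<Psi> (Complex u Y + of_real t * 1)) \<circ> (\<lambda>t. t - u)) has_vector_derivative (1 *\<^sub>R g' (Complex u Y))) (at u)"
      by (rule vector_diff_chain_at[OF d1 d2])
    moreover have "((\<lambda>t::real. \<Psi> (Complex u Y + of_real t * 1)) \<circ> (\<lambda>t. t - u)) = F"
    proof (rule ext)
      fix t
      have "Complex u Y + of_real (t - u) * 1 = Complex t Y" by (simp add: complex_eq_iff)
      thus "((\<lambda>t::real. \<Psi> (Complex u Y + of_real t * 1)) \<circ> (\<lambda>t. t - u)) t = F t"
        by (simp add: F_def)
    qed
    ultimately show ?thesis by simp
  qed
  have loc: "norm (F s - F t) \<le> B * norm (s - t)" if "s \<in> {-1..2}" "t \<in> {-1..2}" for s t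
  proof (rule differentiable_bound[where S="{-1..2}" and f'="\<lambda>u h. h *\<^sub>R g' (Complex u Y)"])
    show "convex {-1..2::real}" by simp
    show "(F has_derivative (\<lambda>h. h *\<^sub>R g' (Complex x Y))) (at x within {-1..2})" for x
      using der[of x] unfolding has_vector_derivative_def by (rule has_derivative_at_withinI)
    show "onorm (\<lambda>h. h *\<^sub>R g' (Complex x Y)) \<le> B" if "x \<in> {-1..2}" for x
    proof -
      have "onorm (\<lambda>h::real. h *\<^sub>R g' (Complex x Y)) = onorm (\<lambda>h::real. h) * norm (g' (Complex x Y))"
        by (rule onorm_scaleR_left) (rule bounded_linear_ident)
      also have "\<dots> = norm (g' (Complex x Y))" by (simp add: onorm_id)
      also have "\<dots> \<le> B0" using B0 that by (auto simp: S_def)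
      also have "\<dots> \<le> B" by (simp add: B_def)
      finally show ?thesis .
    qed
  qed (use that in auto)
  have inv: "gamma_invariant \<Psi>" using assms(1) unfolding Cc_smooth_M_def by blast
  show ?thesis
  proof (intro exI[of _ B] conjI allI impI)
    show "B \<ge> 0" by (simp add: B_def)
    fix s t :: real assume st: "\<bar>s - t\<bar> \<le> 1"
    define k where "k = floor s"
    have Fs: "F s = F (s - of_int k)" using Psi_trans[OF inv assms(2), of "s - of_int k" k] by (simp add: F_def)
    have Ft: "F t = F (t - of_int k)" using Psi_trans[OF inv assms(2), of "t - of_int k" k] by (simp add: F_def)
    have "s - of_int k \<in> {-1..2}" unfolding k_def by (auto simp: floor_le_iff) linarith+
    moreover have "t - of_int k \<in> {-1..2}" using st unfolding k_def by (auto simp: abs_le_iff) linarith+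
    ultimately have "norm (F (s - of_int k) - F (t - of_int k)) \<le> B * norm ((s - of_int k) - (t - of_int k))"
      by (rule loc)
    thus "norm (\<Psi> (Complex s Y) - \<Psi> (Complex t Y)) \<le> B * \<bar>s - t\<bar>"
      using Fs Ft by (simp add: F_def)
  qed
qed


lemma per_int:
  fixes F :: "real \<Rightarrow> 'a"
  assumes per: "\<And>t. F (t + 1) = F t"
  shows "F (t + of_int k) = F t"
proof -
  have nat: "F (t + of_nat n) = F t" for t n
    by (induction n arbitrary: t) (auto simp: per add.assoc[symmetric])
  show ?thesis
  proof (cases "k \<ge> 0")
    case True thus ?thesis using nat[of t "nat k"] by simp
  next
    case False
    have "F (t + of_int k) = F (t + of_int k + of_nat (nat (-k)))" using nat by simp
    also have "t + of_int k + of_nat (nat (-k)) = t" using False by simp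
    finally show ?thesis .
  qed
qed

lemma int_period:
  fixes F :: "real \<Rightarrow> complex"
  assumes cont: "continuous_on UNIV F" and per: "\<And>t. F (t + 1) = F t"
  shows "integral {a..a+1} F = integral {0..1} F"
proof -
  define k where "k = floor a"
  define a' where "a' = a - of_int k"
  have a': "0 \<le> a'" "a' \<le> 1" unfolding a'_def k_def by linarith+
  have int: "F integrable_on {u..v}" for u v
    by (rule integrable_continuous_interval) (rule continuous_on_subset[OF cont], simp)
  have "integral {a..a+1} F = integral {a - of_int k..a + 1 - of_int k} (\<lambda>x. F (x + of_int k))"
    by (rule integral_shift_real_ivl[symmetric])
  also have "\<dots> = integral {a'..a'+1} F"
    using per_int[of F, OF per] by (simp add: a'_def algebra_simps)
  also have "\<dots> = integral {a'..1} F + integral {1..a'+1} F"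
    using a' int Henstock_Kurzweil_Integration.integral_combine[of a' 1 "a'+1" F] by simp
  also have "integral {1..a'+1} F = integral {1-1..a'+1-1} (\<lambda>x. F (x + 1))"
    by (rule integral_shift_real_ivl[symmetric])
  also have "\<dots> = integral {0..a'} F" using per by simp
  also have "integral {a'..1} F + integral {0..a'} F = integral {0..1} F"
    using a' int Henstock_Kurzweil_Integration.integral_combine[of 0 a' 1 F] by (simp add: add.commute)
  finally show ?thesis .
qed

lemma riemann_sum:
  fixes F :: "real \<Rightarrow> complex"
  assumes cont: "continuous_on UNIV F" and per: "\<And>t. F (t + 1) = F t"
    and L: "L \<ge> 0" and lip: "\<And>s t. \<bar>s - t\<bar> \<le> 1 \<Longrightarrow> norm (F s - F t) \<le> L * \<bar>s - t\<bar>"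
    and M: "M \<ge> 1"
  shows "norm ((\<Sum>k<M. F (s + real k / real M)) - of_nat M * integral {0..1} F) \<le> L"
proof -
  define x where "x = (\<lambda>k::nat. s + real k / real M)"
  have int: "F integrable_on {u..v}" for u v
    by (rule integrable_continuous_interval) (rule continuous_on_subset[OF cont], simp)
  have split: "integral {s..x n} F = (\<Sum>k<n. integral {x k..x (Suc k)} F)" for n
  proof (induction n)
    case 0 thus ?case by (simp add: x_def)
  next
    case (Suc n)
    have "integral {s..x (Suc n)} F = integral {s..x n} F + integral {x n..x (Suc n)} F"
    proof -
      have "s \<le> x n" "x n \<le> x (Suc n)" using M by (auto simp: x_def divide_right_mono)
      thus ?thesis using Henstock_Kurzweil_Integration.integral_combine[of s "x n" "x (Suc n)" F] int by simp
    qed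
    thus ?case using Suc by simp
  qed
  have xM: "x M = s + 1" using M by (simp add: x_def)
  have I: "integral {0..1} F = (\<Sum>k<M. integral {x k..x (Suc k)} F)"
    using split[of M] int_period[OF cont per, of s] xM by simp
  have piece: "norm (F (x k) / of_nat M - integral {x k..x (Suc k)} F) \<le> L / real M / real M" for k
  proof -
    have len: "x (Suc k) - x k = 1 / real M" by (simp add: x_def diff_divide_distrib[symmetric])
    have "1 / real M \<ge> 0" by simp
    hence le: "x k \<le> x (Suc k)" using len by linarith
    have "integral {x k..x (Suc k)} F - F (x k) / of_nat M = integral {x k..x (Suc k)} (\<lambda>u. F u - F (x k))"
    proof -
      have "integral {x k..x (Suc k)} (\<lambda>u. F u - F (x k)) = integral {x k..x (Suc k)} F - integral {x k..x (Suc k)} (\<lambda>u. F (x k))"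
        using int by (rule integral_diff) (rule integrable_const_ivl)
      also have "integral {x k..x (Suc k)} (\<lambda>u. F (x k)) = (1 / real M) *\<^sub>R F (x k)"
        using le len by (simp add: content_real)
      also have "(1 / real M) *\<^sub>R F (x k) = F (x k) / of_nat M"
        by (simp add: scaleR_conv_of_real)
      finally show ?thesis by simp
    qed
    also have "norm \<dots> \<le> (L / real M) * (x (Suc k) - x k)"
    proof (rule integral_bound[OF le])
      show "continuous_on {x k..x (Suc k)} (\<lambda>u. F u - F (x k))"
        by (intro continuous_intros continuous_on_subset[OF cont]) auto
      fix t assume t: "t \<in> {x k..x (Suc k)}"
      hence d: "\<bar>t - x k\<bar> \<le> 1 / real M" using len by auto
      also have "1 / real M \<le> 1" using M by simp
      finally have "norm (F t - F (x k)) \<le> L * \<bar>t - x k\<bar>" by (rule lip)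
      also have "\<dots> \<le> L * (1 / real M)" using d L by (rule mult_left_mono)
      finally show "norm (F t - F (x k)) \<le> L / real M" by simp
    qed
    also have "\<dots> = L / real M / real M" using len by simp
    finally show ?thesis by (simp add: norm_minus_commute)
  qed
  have "(\<Sum>k<M. F (x k)) - of_nat M * integral {0..1} F
        = of_nat M * (\<Sum>k<M. F (x k) / of_nat M - integral {x k..x (Suc k)} F)"
    using M by (simp add: I sum_subtractf sum_distrib_left algebra_simps)
  hence "norm ((\<Sum>k<M. F (x k)) - of_nat M * integral {0..1} F)
        = real M * norm (\<Sum>k<M. F (x k) / of_nat M - integral {x k..x (Suc k)} F)"
    by (simp add: norm_mult)
  also have "\<dots> \<le> real M * (\<Sum>k<M. L / real M / real M)"
    by (intro mult_left_mono order.trans[OF norm_sum sum_mono] piece) auto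
  also have "\<dots> = L" using M by simp
  finally show ?thesis by (simp add: x_def)
qed


lemma prod_primes_dvd_iff:
  fixes D :: "nat set"
  assumes "finite D" "\<forall>p\<in>D. prime p"
  shows "(\<Prod>D) dvd X \<longleftrightarrow> (\<forall>p\<in>D. p dvd X)"
  using assms
proof (induction D rule: finite_induct)
  case empty thus ?case by simp
next
  case (insert p D)
  have cop: "coprime p (\<Prod>D)"
    using insert by (intro prod_coprime_right primes_coprime) auto
  have "(\<Prod>(insert p D)) = p * \<Prod>D" using insert by simp
  moreover have "p * \<Prod>D dvd X \<longleftrightarrow> p dvd X \<and> \<Prod>D dvd X"
  proof
    assume "p * \<Prod>D dvd X" thus "p dvd X \<and> \<Prod>D dvd X"
      using dvd_mult_left dvd_mult_right by blast
  next
    assume "p dvd X \<and> \<Prod>D dvd X" thus "p * \<Prod>D dvd X" using cop divides_mult by blast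
  qed
  ultimately show ?case using insert by auto
qed

lemma coprime_iff_pf:
  fixes X N :: nat
  assumes "N > 0"
  shows "coprime X N \<longleftrightarrow> (\<forall>p\<in>prime_factors N. \<not> p dvd X)"
proof
  assume c: "coprime X N"
  show "\<forall>p\<in>prime_factors N. \<not> p dvd X"
  proof (intro ballI notI)
    fix p assume p: "p \<in> prime_factors N" "p dvd X"
    hence "prime p" "p dvd N" by (auto simp: in_prime_factors_iff)
    have "is_unit p" using coprime_common_divisor[OF c p(2) \<open>p dvd N\<close>] .
    with \<open>prime p\<close> show False by (simp add: not_prime_unit)
  qed
next
  assume h: "\<forall>p\<in>prime_factors N. \<not> p dvd X"
  show "coprime X N"
  proof (rule ccontr)
    assume "\<not> coprime X N"
    hence "gcd X N \<noteq> 1" using coprime_iff_gcd_eq_1 by blast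
    from prime_factor_nat[OF this] obtain p where p: "prime p" "p dvd gcd X N" by blast
    hence "p dvd X" "p dvd N" by simp_all
    hence "p \<in> prime_factors N" using p(1) assms by (simp add: in_prime_factors_iff)
    with h \<open>p dvd X\<close> show False by blast
  qed
qed

lemma sieve:
  fixes X N :: nat
  assumes "N > 0"
  shows "(if coprime X N then 1 else 0 :: 'a :: comm_ring_1) =
         (\<Sum>D\<in>Pow (prime_factors N). (-1)^card D * (if \<Prod>D dvd X then 1 else 0))"
proof -
  define P where "P = prime_factors N"
  have fin: "finite P" by (simp add: P_def)
  have "(\<Prod>p\<in>P. (- (if p dvd X then 1 else 0)) + 1) =
        (\<Sum>D\<in>Pow P. (\<Prod>p\<in>D. - (if p dvd X then 1 else 0 :: 'a)) * (\<Prod>p\<in>P-D. 1))"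
    by (rule prod_add[OF fin])
  also have "\<dots> = (\<Sum>D\<in>Pow P. (-1)^card D * (if \<Prod>D dvd X then 1 else 0))"
  proof (rule sum.cong[OF refl])
    fix D assume D: "D \<in> Pow P"
    hence finD: "finite D" using fin finite_subset by auto
    have pr: "\<forall>p\<in>D. prime p" using D by (auto simp: P_def in_prime_factors_iff)
    have "(\<Prod>p\<in>D. - (if p dvd X then 1 else 0 :: 'a)) = (\<Prod>p\<in>D. (-1) * (if p dvd X then 1 else 0 :: 'a))"
      by simp
    also have "\<dots> = (\<Prod>p\<in>D. (-1::'a)) * (\<Prod>p\<in>D. (if p dvd X then 1 else 0 :: 'a))"
      by (rule prod.distrib)
    also have "(\<Prod>p\<in>D. (-1::'a)) = (-1)^card D" by simp
    also have "(\<Prod>p\<in>D. (if p dvd X then 1 else 0 :: 'a)) = (if \<Prod>D dvd X then 1 else 0)"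
    proof (cases "\<forall>p\<in>D. p dvd X")
      case True
      thus ?thesis using prod_primes_dvd_iff[OF finD pr] by simp
    next
      case False
      then obtain p where "p \<in> D" "\<not> p dvd X" by blast
      hence "(\<Prod>p\<in>D. (if p dvd X then 1 else 0 :: 'a)) = 0" using finD by (intro prod_zero) auto
      thus ?thesis using prod_primes_dvd_iff[OF finD pr] False by simp
    qed
    finally show "(\<Prod>p\<in>D. - (if p dvd X then 1 else 0 :: 'a)) * (\<Prod>p\<in>P-D. 1) = (-1)^card D * (if \<Prod>D dvd X then 1 else 0)"
      by simp
  qed
  also have "(\<Prod>p\<in>P. (- (if p dvd X then 1 else 0)) + 1) = (if coprime X N then 1 else 0 :: 'a)"
  proof (cases "coprime X N")
    case True
    hence "\<forall>p\<in>P. \<not> p dvd X" using coprime_iff_pf[OF assms] by (simp add: P_def)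
    thus ?thesis using True by simp
  next
    case False
    then obtain p where "p \<in> P" "p dvd X" using coprime_iff_pf[OF assms] by (auto simp: P_def)
    hence "(\<Prod>p\<in>P. (- (if p dvd X then 1 else 0)) + 1) = (0::'a)" using fin by (intro prod_zero) auto
    thus ?thesis using False by simp
  qed
  finally show ?thesis by (simp add: P_def)
qed

lemma pf_prod_dvd:
  fixes N :: nat
  assumes "N > 0" "D \<subseteq> prime_factors N"
  shows "\<Prod>D dvd N"
proof -
  have fin: "finite (prime_factors N)" by simp
  have "\<Prod>D dvd (\<Prod>p\<in>prime_factors N. p ^ multiplicity p N)"
  proof (rule prod_dvd_prod_subset2[OF fin assms(2)])
    fix p assume "p \<in> D"
    hence "multiplicity p N > 0" using assms(2) by (auto simp: prime_factors_multiplicity)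
    thus "p dvd p ^ multiplicity p N" by (simp add: dvd_power)
  qed
  thus ?thesis using prime_factorization_nat[OF assms(1)] by simp
qed

lemma totient_sieve:
  fixes N :: nat
  assumes "N > 0"
  shows "real (totient N) = (\<Sum>D\<in>Pow (prime_factors N). (-1)^card D * (real N / real (\<Prod>D)))"
proof -
  define P where "P = prime_factors N"
  have fin: "finite P" by (simp add: P_def)
  have "real (totient N) = real N * (\<Prod>p\<in>P. - (1 / real p) + 1)"
    by (simp add: totient_formula2 P_def)
  also have "(\<Prod>p\<in>P. - (1 / real p) + 1) = (\<Sum>D\<in>Pow P. (\<Prod>p\<in>D. - (1 / real p)) * (\<Prod>p\<in>P-D. 1))"
    by (rule prod_add[OF fin])
  also have "real N * \<dots> = (\<Sum>D\<in>Pow P. (-1)^card D * (real N / real (\<Prod>D)))"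
    unfolding sum_distrib_left
  proof (rule sum.cong[OF refl])
    fix D assume D: "D \<in> Pow P"
    have "(\<Prod>p\<in>D. - (1 / real p)) = (\<Prod>p\<in>D. (-1) * (1 / real p))" by simp
    also have "\<dots> = (\<Prod>p\<in>D. (-1::real)) * (\<Prod>p\<in>D. 1 / real p)" by (rule prod.distrib)
    also have "(\<Prod>p\<in>D. (-1::real)) = (-1)^card D" by simp
    also have "(\<Prod>p\<in>D. 1 / real p) = 1 / real (\<Prod>D)" by (simp add: prod_dividef)
    finally show "real N * ((\<Prod>p\<in>D. - (1 / real p)) * (\<Prod>p\<in>P-D. 1)) = (-1)^card D * (real N / real (\<Prod>D))"
      by simp
  qed
  finally show ?thesis by (simp add: P_def)
qed


lemma ap_exists:
  fixes d b uz :: nat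
  assumes d: "d > 0" and cop: "coprime b d"
  shows "\<exists>k1<d. d dvd uz + b * k1"
proof -
  define f where "f = (\<lambda>k. (uz + b * k) mod d)"
  have inj: "inj_on f {..<d}"
  proof (rule inj_onI)
    fix k k' assume k: "k \<in> {..<d}" "k' \<in> {..<d}" "f k = f k'"
    hence "[uz + b * k = uz + b * k'] (mod d)" by (simp add: f_def cong_def)
    hence "[b * k = b * k'] (mod d)" by (simp add: cong_add_lcancel_nat)
    hence "[k = k'] (mod d)" using cop by (simp add: cong_mult_lcancel_nat)
    thus "k = k'" using k by (auto intro: cong_less_modulus_unique_nat)
  qed
  have sub: "f ` {..<d} \<subseteq> {..<d}" using d by (auto simp: f_def)
  have "card (f ` {..<d}) = card {..<d::nat}" using card_image[OF inj] by simp
  hence "f ` {..<d} = {..<d}" using sub by (intro card_subset_eq) auto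
  hence "0 \<in> f ` {..<d}" using d by simp
  then obtain k1 where "k1 < d" "f k1 = 0" by auto
  thus ?thesis by (auto simp: f_def dvd_eq_mod_eq_0)
qed

lemma ap_set:
  fixes d b uz N k1 :: nat
  assumes d: "d > 0" and dN: "d dvd N" and cop: "coprime b d" and k1: "k1 < d" "d dvd uz + b * k1"
  shows "{k. k < N \<and> d dvd uz + b * k} = (\<lambda>t. k1 + d * t) ` {..<N div d}"
proof (intro equalityI subsetI)
  fix k assume "k \<in> {k. k < N \<and> d dvd uz + b * k}"
  hence k: "k < N" "d dvd uz + b * k" by auto
  have "[uz + b * k = uz + b * k1] (mod d)" using k(2) k1(2) by (simp add: cong_def dvd_eq_mod_eq_0)
  hence "[b * k = b * k1] (mod d)" by (simp add: cong_add_lcancel_nat)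
  hence "[k = k1] (mod d)" using cop by (simp add: cong_mult_lcancel_nat)
  hence km: "k mod d = k1" using k1 by (simp add: cong_def)
  have "k = d * (k div d) + k mod d" by simp
  hence ke: "k = k1 + d * (k div d)" using km by linarith
  have "k div d < N div d"
  proof (rule ccontr)
    assume "\<not> k div d < N div d"
    hence "d * (N div d) \<le> d * (k div d)" by simp
    moreover have "d * (N div d) = N" using dN by simp
    moreover have "d * (k div d) \<le> k" by (simp add: times_div_less_eq_dividend)
    ultimately show False using k(1) by linarith
  qed
  thus "k \<in> (\<lambda>t. k1 + d * t) ` {..<N div d}" using ke by blast
next
  fix k assume "k \<in> (\<lambda>t. k1 + d * t) ` {..<N div d}"
  then obtain t where t: "t < N div d" "k = k1 + d * t" by auto
  have "k1 + d * t < d + d * t" using k1 by simp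
  also have "\<dots> = d * (t + 1)" by simp
  also have "\<dots> \<le> d * (N div d)" using t(1) by (intro mult_left_mono) auto
  also have "\<dots> = N" using dN by simp
  finally have "k < N" using t by simp
  moreover have "d dvd uz + b * k"
  proof -
    have "uz + b * k = (uz + b * k1) + d * (b * t)" using t(2) by (simp add: algebra_simps)
    thus ?thesis using k1(2) by (simp only:) (rule dvd_add, simp_all)
  qed
  ultimately show "k \<in> {k. k < N \<and> d dvd uz + b * k}" by simp
qed

lemma engine:
  fixes F :: "real \<Rightarrow> complex" and N b uz :: nat and L :: real
  assumes cont: "continuous_on UNIV F" and per: "\<And>t. F (t + 1) = F t"
    and L: "L \<ge> 0" and lip: "\<And>s t. \<bar>s - t\<bar> \<le> 1 \<Longrightarrow> norm (F s - F t) \<le> L * \<bar>s - t\<bar>"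
    and N: "N > 0" and b: "b > 0" and cop: "coprime b N"
  shows "norm ((\<Sum>k\<in>{k. k < N \<and> coprime (uz + b*k) N}. F (real (uz + b*k) / real (b*N)))
           - of_nat (totient N) * integral {0..1} F) \<le> L * 2 ^ card (prime_factors N)"
proof -
  define P where "P = prime_factors N"
  define v where "v = (\<lambda>k. F (real (uz + b*k) / real (b*N)))"
  define I where "I = integral {0..1} F"
  define A where "A = (\<lambda>D. \<Sum>k\<in>{k. k < N \<and> \<Prod>D dvd uz + b*k}. v k)"
  have finP: "finite P" by (simp add: P_def)
  have "(\<Sum>k\<in>{k. k < N \<and> coprime (uz + b*k) N}. v k) = (\<Sum>k<N. (if coprime (uz + b*k) N then 1 else 0) * v k)"
  proof -
    have "{k. k < N \<and> coprime (uz + b*k) N} = {k\<in>{..<N}. coprime (uz + b*k) N}" by auto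
    hence "(\<Sum>k\<in>{k. k < N \<and> coprime (uz + b*k) N}. v k) = (\<Sum>k<N. if coprime (uz + b*k) N then v k else 0)"
      using sum.inter_filter[of "{..<N}" v "\<lambda>k. coprime (uz + b*k) N"] by simp
    also have "\<dots> = (\<Sum>k<N. (if coprime (uz + b*k) N then 1 else 0) * v k)"
      by (rule sum.cong) auto
    finally show ?thesis .
  qed
  also have "\<dots> = (\<Sum>k<N. \<Sum>D\<in>Pow P. (-1)^card D * ((if \<Prod>D dvd uz + b*k then 1 else 0) * v k))"
    by (simp add: sieve[OF N] P_def sum_distrib_right mult.assoc)
  also have "\<dots> = (\<Sum>D\<in>Pow P. (-1)^card D * (\<Sum>k<N. (if \<Prod>D dvd uz + b*k then 1 else 0) * v k))"
    by (subst sum.swap) (simp add: sum_distrib_left)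
  also have "\<dots> = (\<Sum>D\<in>Pow P. (-1)^card D * A D)"
  proof (rule sum.cong[OF refl])
    fix D
    have "{k. k < N \<and> \<Prod>D dvd uz + b*k} = {k\<in>{..<N}. \<Prod>D dvd uz + b*k}" by auto
    hence "A D = (\<Sum>k<N. if \<Prod>D dvd uz + b*k then v k else 0)"
      using sum.inter_filter[of "{..<N}" v "\<lambda>k. \<Prod>D dvd uz + b*k"] by (simp add: A_def)
    also have "\<dots> = (\<Sum>k<N. (if \<Prod>D dvd uz + b*k then 1 else 0) * v k)"
      by (rule sum.cong) auto
    finally show "(-1)^card D * (\<Sum>k<N. (if \<Prod>D dvd uz + b*k then 1 else 0) * v k) = (-1)^card D * A D"
      by simp
  qed
  finally have lhs: "(\<Sum>k\<in>{k. k < N \<and> coprime (uz + b*k) N}. v k) = (\<Sum>D\<in>Pow P. (-1)^card D * A D)" .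
  have tot: "of_nat (totient N) = (\<Sum>D\<in>Pow P. (-1)^card D * of_nat (N div \<Prod>D) :: complex)"
  proof -
    have "real (totient N) = (\<Sum>D\<in>Pow P. (-1)^card D * real (N div \<Prod>D))"
    proof -
      have "real (totient N) = (\<Sum>D\<in>Pow P. (-1)^card D * (real N / real (\<Prod>D)))"
        using totient_sieve[OF N] by (simp add: P_def)
      also have "\<dots> = (\<Sum>D\<in>Pow P. (-1)^card D * real (N div \<Prod>D))"
      proof (rule sum.cong[OF refl])
        fix D assume "D \<in> Pow P"
        hence "\<Prod>D dvd N" using pf_prod_dvd[OF N] by (simp add: P_def)
        thus "(-1)^card D * (real N / real (\<Prod>D)) = (-1)^card D * real (N div \<Prod>D)"
          by (simp add: real_of_nat_div)
      qed
      finally show ?thesis .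
    qed
    hence "complex_of_real (real (totient N)) = complex_of_real (\<Sum>D\<in>Pow P. (-1)^card D * real (N div \<Prod>D))"
      by simp
    thus ?thesis by (simp add: of_real_sum)
  qed
  have pieceD: "norm (A D - of_nat (N div \<Prod>D) * I) \<le> L" if D: "D \<in> Pow P" for D
  proof -
    define d where "d = \<Prod>D"
    have dN: "d dvd N" using pf_prod_dvd[OF N] D by (simp add: P_def d_def)
    have d0: "d > 0"
    proof (rule ccontr)
      assume "\<not> d > 0" hence "d = 0" by simp
      with dN N show False by simp
    qed
    obtain e where e: "N = d * e" using dN by blast
    have copd: "coprime b d" using cop unfolding e by simp
    obtain k1 where k1: "k1 < d" "d dvd uz + b * k1" using ap_exists[OF d0 copd] by blast
    define M where "M = N div d"
    have Me: "M = e" using d0 by (simp add: M_def e)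
    have "e \<noteq> 0" using N e by (rule_tac ccontr) simp
    hence M1: "M \<ge> 1" using Me by simp
    have Md: "real M = real N / real d" using dN by (simp add: M_def real_of_nat_div)
    define s where "s = real (uz + b*k1) / real (b*N)"
    have "A D = (\<Sum>k\<in>(\<lambda>t. k1 + d * t) ` {..<M}. v k)"
      unfolding A_def d_def[symmetric] M_def using ap_set[OF d0 dN copd k1] by simp
    also have "\<dots> = (\<Sum>t<M. v (k1 + d * t))"
      using d0 by (subst sum.reindex) (auto simp: inj_on_def)
    also have "\<dots> = (\<Sum>t<M. F (s + real t / real M))"
    proof (rule sum.cong[OF refl])
      fix t
      have "real (uz + b * (k1 + d * t)) / real (b * N) = s + real t / real M"
        using b N d0 Md M1 by (simp add: s_def field_simps)
      thus "v (k1 + d * t) = F (s + real t / real M)" by (simp add: v_def)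
    qed
    finally have "A D = (\<Sum>t<M. F (s + real t / real M))" .
    thus ?thesis using riemann_sum[OF cont per L lip M1, of s] by (simp add: M_def d_def I_def)
  qed
  have "(\<Sum>k\<in>{k. k < N \<and> coprime (uz + b*k) N}. v k) - of_nat (totient N) * I
        = (\<Sum>D\<in>Pow P. (-1)^card D * (A D - of_nat (N div \<Prod>D) * I))"
    unfolding lhs tot by (simp add: sum_distrib_right sum_distrib_left sum_subtractf algebra_simps)
  also have "norm \<dots> \<le> (\<Sum>D\<in>Pow P. L)"
  proof (rule order.trans[OF norm_sum sum_mono])
    fix D assume "D \<in> Pow P"
    thus "norm ((-1)^card D * (A D - of_nat (N div \<Prod>D) * I)) \<le> L"
      using pieceD by (simp add: norm_mult norm_power)
  qed
  also have "\<dots> = L * 2 ^ card P" using finP by (simp add: card_Pow)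
  finally show ?thesis by (simp add: v_def I_def P_def)
qed


lemma pp_bound:
  fixes p j :: nat
  assumes p: "prime p"
  shows "8 * p ^ Suc j \<le> (if p = 2 then 16 else if p = 3 then 3 else 1) * (p ^ j * (p - 1)) ^ 3"
proof -
  have "1 \<le> p" using prime_gt_1_nat[OF p] by linarith
  hence p1: "1 \<le> p ^ j" by (rule one_le_power)
  have "(p ^ j) ^ 1 \<le> (p ^ j) ^ 3" by (rule power_increasing[OF _ p1]) simp
  hence pj: "p ^ j \<le> (p ^ j) ^ 3" by simp
  consider "p = 2" | "p = 3" | "p \<ge> 5"
  proof -
    have "p \<ge> 2" using prime_ge_2_nat[OF p] .
    moreover have "p \<noteq> 4"
    proof
      assume "p = 4"
      hence "prime ((2::nat) * 2)" using p by simp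
      from prime_product[OF this] show False by simp
    qed
    ultimately show ?thesis using that by linarith
  qed
  thus ?thesis
  proof cases
    case 1
    have "8 * p ^ Suc j = 16 * p ^ j" using 1 by simp
    also have "\<dots> \<le> 16 * (p ^ j) ^ 3" using pj by simp
    also have "\<dots> = 16 * (p ^ j * (p - 1)) ^ 3" using 1 by simp
    finally show ?thesis using 1 by simp
  next
    case 2
    have "8 * p ^ Suc j = 24 * p ^ j" using 2 by simp
    also have "\<dots> \<le> 24 * (p ^ j) ^ 3" using pj by simp
    also have "\<dots> = 3 * ((p ^ j) ^ 3 * 8)" by simp
    also have "(p ^ j) ^ 3 * 8 = (p ^ j * (p - 1)) ^ 3" using 2 by (simp add: power_mult_distrib)
    finally show ?thesis using 2 by simp
  next
    case 3
    have c: "8 * p \<le> (p - 1) ^ 3"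
    proof -
      have "16 * (p - 1) \<le> (p - 1) * (p - 1) * (p - 1)"
      proof -
        have "4 \<le> p - 1" using 3 by simp
        hence "16 \<le> (p - 1) * (p - 1)" using mult_mono[of 4 "p - 1" 4 "p - 1"] by simp
        thus ?thesis by (intro mult_right_mono) auto
      qed
      hence h1: "16 * (p - 1) \<le> (p - 1) ^ 3" by (simp only: power3_eq_cube)
      have h2: "8 * p \<le> 16 * (p - 1)" using 3 by simp
      show ?thesis by (rule order.trans[OF h2 h1])
    qed
    have "8 * p ^ Suc j = (8 * p) * p ^ j" by simp
    also have "\<dots> \<le> (p - 1) ^ 3 * (p ^ j) ^ 3" using c pj by (intro mult_mono) auto
    also have "\<dots> = (p ^ j * (p - 1)) ^ 3" by (simp add: power_mult_distrib)
    finally show ?thesis using 3 by simp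
  qed
qed

lemma omega_bound:
  fixes N :: nat
  assumes N: "N > 0"
  shows "8 ^ card (prime_factors N) * N \<le> 48 * totient N ^ 3"
proof -
  define P where "P = prime_factors N"
  define k where "k = (\<lambda>p. multiplicity p N)"
  define C where "C = (\<lambda>p::nat. if p = 2 then 16 else if p = 3 then 3 else 1::nat)"
  have fin: "finite P" by (simp add: P_def)
  have kpos: "k p > 0" if "p \<in> P" for p using that by (simp add: P_def k_def prime_factors_multiplicity)
  have pr: "prime p" if "p \<in> P" for p using that by (simp add: P_def in_prime_factors_iff)
  have "8 ^ card P * N = (\<Prod>p\<in>P. 8 * p ^ k p)"
    using prime_factorization_nat[OF N] by (simp add: P_def k_def prod.distrib)
  also have "\<dots> \<le> (\<Prod>p\<in>P. C p * (p ^ (k p - 1) * (p - 1)) ^ 3)"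
  proof (rule prod_mono)
    fix p assume p: "p \<in> P"
    have "Suc (k p - 1) = k p" using kpos[OF p] by simp
    thus "0 \<le> 8 * p ^ k p \<and> 8 * p ^ k p \<le> C p * (p ^ (k p - 1) * (p - 1)) ^ 3"
      using pp_bound[OF pr[OF p], of "k p - 1"] by (simp add: C_def)
  qed
  also have "\<dots> = (\<Prod>p\<in>P. C p) * (\<Prod>p\<in>P. (p ^ (k p - 1) * (p - 1)) ^ 3)"
    by (rule prod.distrib)
  also have "(\<Prod>p\<in>P. (p ^ (k p - 1) * (p - 1)) ^ 3) = (\<Prod>p\<in>P. p ^ (k p - 1) * (p - 1)) ^ 3"
    by (rule prod_power_distrib[symmetric])
  also have "(\<Prod>p\<in>P. p ^ (k p - 1) * (p - 1)) = totient N"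
    using totient_formula1[OF N] by (simp add: P_def k_def)
  also have "(\<Prod>p\<in>P. C p) \<le> 48"
  proof -
    have "(\<Prod>p\<in>P. C p) = (\<Prod>p\<in>P \<inter> {2,3}. C p)"
      using fin by (intro prod.mono_neutral_right) (auto simp: C_def)
    also have "\<dots> \<le> 48"
    proof -
      have "(\<Prod>p\<in>{2,3}. C p) = (\<Prod>p\<in>{2,3} - (P \<inter> {2,3}). C p) * (\<Prod>p\<in>P \<inter> {2,3}. C p)"
        by (rule prod.subset_diff) auto
      moreover have "(\<Prod>p\<in>{2,3} - (P \<inter> {2,3}). C p) \<ge> 1" by (intro prod_ge_1) (simp add: C_def)
      moreover have "(\<Prod>p\<in>{2::nat,3}. C p) = 48" by (simp add: C_def)
      moreover have "(\<Prod>p\<in>P \<inter> {2,3}. C p) \<le> (\<Prod>p\<in>{2,3} - (P \<inter> {2,3}). C p) * (\<Prod>p\<in>P \<inter> {2,3}. C p)"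
        using mult_le_mono1[of 1 "(\<Prod>p\<in>{2,3} - (P \<inter> {2,3}). C p)" "(\<Prod>p\<in>P \<inter> {2,3}. C p)"] calculation(2) by simp
      ultimately show ?thesis by linarith
    qed
    finally show ?thesis .
  qed
  hence "(\<Prod>p\<in>P. C p) * totient N ^ 3 \<le> 48 * totient N ^ 3" by (rule mult_right_mono) simp
  finally show ?thesis by (simp add: P_def)
qed

lemma omega_ratio_lim:
  "(\<lambda>N. 2 ^ card (prime_factors N) / real (totient N)) \<longlonglongrightarrow> 0"
proof (rule order_tendstoI)
  fix a :: real assume "a < 0"
  thus "\<forall>\<^sub>F N in sequentially. a < 2 ^ card (prime_factors N) / real (totient N)"
  proof (intro always_eventually allI)
    fix N
    have "0 \<le> (2::real) ^ card (prime_factors N) / real (totient N)" by simp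
    thus "a < 2 ^ card (prime_factors N) / real (totient N)" using \<open>a < 0\<close> by linarith
  qed
next
  fix a :: real assume a: "a > 0"
  have "\<forall>\<^sub>F N in sequentially. 48 / real N < a ^ 3"
  proof -
    have "(\<lambda>N. 48 / real N) \<longlonglongrightarrow> 0" by (rule lim_const_over_n)
    thus ?thesis using a by (intro order_tendstoD) auto
  qed
  thus "\<forall>\<^sub>F N in sequentially. 2 ^ card (prime_factors N) / real (totient N) < a"
    using eventually_gt_at_top[of 0]
  proof eventually_elim
    case (elim N)
    define x where "x = 2 ^ card (prime_factors N) / real (totient N)"
    have tp: "real (totient N) > 0" using elim by simp
    have "real (8 ^ card (prime_factors N) * N) \<le> real (48 * totient N ^ 3)"
      using omega_bound[of N] elim by linarith
    hence "8 ^ card (prime_factors N) * real N \<le> 48 * real (totient N) ^ 3" by simp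
    moreover have "x ^ 3 = 8 ^ card (prime_factors N) / real (totient N) ^ 3"
      by (simp add: x_def power_divide power_mult[symmetric] mult.commute[of _ 3] power_mult)
    ultimately have "(real N * x ^ 3) * real (totient N) ^ 3 \<le> 48 * real (totient N) ^ 3"
      using tp by (simp add: field_simps)
    hence "real N * x ^ 3 \<le> 48" using tp by simp
    hence "x ^ 3 * real N \<le> 48" by (simp add: mult.commute)
    hence "x ^ 3 \<le> 48 / real N" using elim by (simp add: field_simps)
    hence "x ^ 3 < a ^ 3" using elim by linarith
    hence "x < a" using a power_less_imp_less_base[of x 3 a] by simp
    thus ?case by (simp add: x_def)
  qed
qed


lemma cong_mul_diff: "[x + m * t = x] (mod (m::int))"
  by (simp add: cong_iff_dvd_diff)

lemma aj_coprime:
  fixes a :: int and b N j :: nat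
  assumes ab: "coprime a (int b)" and Nb: "coprime N b" and jN: "coprime j N"
  shows "coprime (a * int N + int j * int b) (int b * int N)"
proof -
  have c1: "coprime (a * int N) (int b)" using ab Nb by (simp add: coprime_commute)
  have "[a * int N = a * int N + int j * int b] (mod int b)"
    by (simp add: cong_iff_dvd_diff)
  hence c1': "coprime (a * int N + int j * int b) (int b)" using c1 by (rule cong_imp_coprime)
  have c2: "coprime (int j * int b) (int N)" using jN Nb by (simp add: coprime_commute)
  have "[int j * int b = a * int N + int j * int b] (mod int N)"
    by (simp add: cong_iff_dvd_diff)
  hence c2': "coprime (a * int N + int j * int b) (int N)" using c2 by (rule cong_imp_coprime)
  show ?thesis using c1' c2' by simp
qed

lemma inv_exists:
  fixes a u0 :: int and b N j :: nat
  assumes b: "b > 0" and N: "N > 0" and ab: "coprime a (int b)" and Nb: "coprime N b"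
    and jN: "coprime j N" and u0: "0 \<le> u0" "u0 < int b" and u0c: "[a * int N * u0 = -1] (mod int b)"
  shows "\<exists>k::nat. k < N \<and> [(a * int N + int j * int b) * (u0 + int b * int k) = -1] (mod int b * int N)"
proof -
  define aj where "aj = a * int N + int j * int b"
  define m where "m = int b * int N"
  have m0: "m > 0" using b N by (simp add: m_def)
  have cop: "coprime aj m" using aj_coprime[OF ab Nb jN] by (simp add: aj_def m_def)
  obtain x where x: "[aj * x = 1] (mod m)" using cong_solve_coprime_int[OF cop] by blast
  define A where "A = (- x) mod m"
  have A: "0 \<le> A" "A < m" using m0 by (simp_all add: A_def)
  have "[aj * A = aj * (- x)] (mod m)" unfolding A_def by (intro cong_mult cong_refl) (simp add: cong_def)
  moreover have "[aj * (- x) = -1] (mod m)" using x by (metis cong_minus_minus_iff minus_mult_right)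
  ultimately have Ainv: "[aj * A = -1] (mod m)" by (rule cong_trans)
  hence "[aj * A = -1] (mod int b)" unfolding m_def by (rule cong_modulus_mult)
  moreover have "[aj = a * int N] (mod int b)" by (simp add: aj_def cong_iff_dvd_diff)
  ultimately have "[a * int N * A = -1] (mod int b)"
    by (meson cong_mult cong_refl cong_sym cong_trans)
  hence "[a * int N * A = a * int N * u0] (mod int b)" using u0c by (meson cong_sym cong_trans)
  moreover have "coprime (a * int N) (int b)" using ab Nb by (simp add: coprime_commute)
  ultimately have "[A = u0] (mod int b)" by (simp add: cong_mult_lcancel)
  hence "int b dvd A - u0" by (simp add: cong_iff_dvd_diff)
  then obtain t where t: "A - u0 = int b * t" by (auto elim: dvdE)
  have t0: "t \<ge> 0"
  proof (rule ccontr)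
    assume "\<not> t \<ge> 0" hence "t \<le> -1" by simp
    hence "int b * t \<le> int b * (-1)" using b by (intro mult_left_mono) auto
    thus False using t A u0 by simp
  qed
  have tN: "t < int N"
  proof (rule ccontr)
    assume "\<not> t < int N" hence "t \<ge> int N" by simp
    hence "int b * t \<ge> int b * int N" using b by (intro mult_left_mono) auto
    thus False using t A u0 unfolding m_def by linarith
  qed
  define k where "k = nat t"
  have "u0 + int b * int k = A" using t t0 by (simp add: k_def)
  thus ?thesis using Ainv tN t0 by (intro exI[of _ k]) (simp add: aj_def m_def k_def)
qed


lemma card_coprime_below: "N > 0 \<Longrightarrow> card {j. j < N \<and> coprime j N} = totient N"
proof -
  assume N: "N > 0"
  show ?thesis
  proof (cases "N = 1")
    case True
    hence "{j. j < N \<and> coprime j N} = {0}" by auto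
    thus ?thesis using True by simp
  next
    case False
    have "{j. j < N \<and> coprime j N} = totatives N"
    proof (intro equalityI subsetI)
      fix j assume "j \<in> {j. j < N \<and> coprime j N}"
      hence j: "j < N" "coprime j N" by auto
      have "j \<noteq> 0"
      proof
        assume "j = 0" with j(2) have "N = 1" by simp
        with False show False by simp
      qed
      thus "j \<in> totatives N" using j by (simp add: in_totatives_iff)
    next
      fix j assume "j \<in> totatives N"
      hence j: "0 < j" "j \<le> N" "coprime j N" by (auto simp: in_totatives_iff)
      have "j \<noteq> N" using j(3) False by auto
      thus "j \<in> {j. j < N \<and> coprime j N}" using j by simp
    qed
    thus ?thesis by (simp add: totient_def)
  qed
qed

lemma card_T:
  fixes N b u0 :: nat
  assumes N: "N > 0" and b: "b > 0" and cop: "coprime b N"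
  shows "card {k. k < N \<and> coprime (u0 + b*k) N} = totient N"
proof -
  define one where "one = (\<lambda>_::real. 1::complex)"
  have c1: "continuous_on UNIV one" by (simp add: one_def)
  have c2: "\<And>t::real. one (t + 1) = one t" by (simp add: one_def)
  have c3: "(0::real) \<le> 0" by simp
  have c4: "\<And>s t::real. \<bar>s - t\<bar> \<le> 1 \<Longrightarrow> norm (one s - one t) \<le> 0 * \<bar>s - t\<bar>" by (simp add: one_def)
  have "norm ((\<Sum>k\<in>{k. k < N \<and> coprime (u0 + b*k) N}. one (real (u0 + b*k) / real (b*N)))
           - of_nat (totient N) * integral {0..1} one) \<le> 0 * 2 ^ card (prime_factors N)"
    by (rule engine[OF c1 c2 c3 c4 N b cop])
  hence "norm ((\<Sum>k\<in>{k. k < N \<and> coprime (u0 + b*k) N}. 1::complex)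
           - of_nat (totient N) * 1) \<le> 0" by (simp add: one_def)
  hence "of_nat (card {k. k < N \<and> coprime (u0 + b*k) N}) = (of_nat (totient N) :: complex)"
    by simp
  thus ?thesis by (simp only: of_nat_eq_iff)
qed

lemma main_pr_bound:
  fixes a :: int and b N :: nat and c :: real and \<Psi> :: "complex \<Rightarrow> complex" and L :: real
  assumes b: "b > 0" and ab: "coprime a (int b)" and c: "c > 0" and inv: "gamma_invariant \<Psi>"
    and N: "N > 0" and Nb: "coprime N b"
    and cont: "continuous_on UNIV (\<lambda>t. \<Psi> (Complex t (1 / (c * real b ^ 2))))"
    and L: "L \<ge> 0"
    and lip: "\<And>s t. \<bar>s - t\<bar> \<le> 1 \<Longrightarrow> norm (\<Psi> (Complex s (1 / (c * real b ^ 2))) - \<Psi> (Complex t (1 / (c * real b ^ 2)))) \<le> L * \<bar>s - t\<bar>"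
  shows "norm (delta_pr N (of_int a / real b) (c / real N ^ 2) \<Psi> - mu (1 / (c * real b ^ 2)) \<Psi>)
           \<le> L * (2 ^ card (prime_factors N) / real (totient N))"
proof -
  define Y where "Y = 1 / (c * real b ^ 2)"
  have Y: "Y > 0" using b c by (simp add: Y_def)
  define F where "F = (\<lambda>t. \<Psi> (Complex t Y))"
  have per: "F (t + 1) = F t" for t using Psi_trans[OF inv Y, of t 1] by (simp add: F_def)
  define I where "I = integral {0..1} F"
  have muI: "mu Y \<Psi> = I" by (simp add: mu_def I_def F_def)
  have aNb: "coprime (a * int N) (int b)" using ab Nb by (simp add: coprime_commute)
  obtain x where x: "[a * int N * x = 1] (mod int b)" using cong_solve_coprime_int[OF aNb] by blast
  define u0i where "u0i = (- x) mod int b"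
  have u0i: "0 \<le> u0i" "u0i < int b" using b by (simp_all add: u0i_def)
  have "[a * int N * u0i = a * int N * (- x)] (mod int b)" unfolding u0i_def
    by (intro cong_mult cong_refl) (simp add: cong_def)
  moreover have "[a * int N * (- x) = -1] (mod int b)" using x by (metis cong_minus_minus_iff minus_mult_right)
  ultimately have u0c: "[a * int N * u0i = -1] (mod int b)" by (rule cong_trans)
  define u0 where "u0 = nat u0i"
  have u0u: "int u0 = u0i" using u0i by (simp add: u0_def)
  define S where "S = {j. j < N \<and> coprime j N}"
  define T where "T = {k. k < N \<and> coprime (u0 + b*k) N}"
  define aj where "aj = (\<lambda>j::nat. a * int N + int j * int b)"
  define P where "P = (\<lambda>j k::nat. k < N \<and> [aj j * (int u0 + int b * int k) = -1] (mod int b * int N))"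
  define h where "h = (\<lambda>j. SOME k. P j k)"
  have hP: "P j (h j)" if "j \<in> S" for j
  proof -
    have "\<exists>k. P j k" using inv_exists[OF b N ab Nb _ u0i u0c, of j] that
      by (simp add: P_def S_def aj_def u0u)
    thus ?thesis unfolding h_def by (rule someI_ex)
  qed
  have copX: "coprime (int u0 + int b * int (h j)) (int b * int N)" if "j \<in> S" for j
  proof -
    have "[aj j * (int u0 + int b * int (h j)) = -1] (mod int b * int N)" using hP[OF that] by (simp add: P_def)
    hence "coprime (aj j * (int u0 + int b * int (h j))) (int b * int N)"
      by (metis cong_imp_coprime cong_sym coprime_minus_left_iff coprime_1_left)
    thus ?thesis by simp
  qed
  have hT: "h j \<in> T" if "j \<in> S" for j
  proof -
    have "coprime (int u0 + int b * int (h j)) (int N)" using copX[OF that] by simp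
    hence "coprime (u0 + b * h j) N" by (metis coprime_int_iff of_nat_add of_nat_mult)
    thus ?thesis using hP[OF that] by (simp add: T_def P_def)
  qed
  have hinj: "inj_on h S"
  proof (rule inj_onI)
    fix j j' assume jj: "j \<in> S" "j' \<in> S" "h j = h j'"
    define X where "X = int u0 + int b * int (h j)"
    have c1: "[aj j * X = -1] (mod int b * int N)" using hP[OF jj(1)] by (simp add: P_def X_def)
    have c2: "[aj j' * X = -1] (mod int b * int N)" using hP[OF jj(2)] jj(3) by (simp add: P_def X_def)
    have "[X * aj j = X * aj j'] (mod int b * int N)" using c1 c2 by (metis cong_sym cong_trans mult.commute)
    moreover have "coprime X (int b * int N)" using copX[OF jj(1)] by (simp add: X_def)
    ultimately have "[aj j = aj j'] (mod int b * int N)" by (simp add: cong_mult_lcancel)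
    hence "int b * int N dvd aj j - aj j'" by (simp add: cong_iff_dvd_diff)
    hence "int b * int N dvd int b * (int j - int j')" by (simp add: aj_def algebra_simps)
    hence "int N dvd int j - int j'" using b by simp
    hence "[int j = int j'] (mod int N)" by (simp add: cong_iff_dvd_diff)
    hence "[j = j'] (mod N)" by (simp add: cong_int_iff)
    thus "j = j'" using jj by (auto simp: S_def intro: cong_less_modulus_unique_nat)
  qed
  have bij: "bij_betw h S T"
  proof -
    have "h ` S \<subseteq> T" using hT by auto
    moreover have "card (h ` S) = card T"
      using card_image[OF hinj] card_coprime_below[OF N] card_T[OF N b, of u0] Nb
      by (simp add: S_def T_def coprime_commute)
    moreover have "finite T" by (simp add: T_def)
    ultimately have "h ` S = T" by (intro card_subset_eq) auto
    thus ?thesis using hinj by (simp add: bij_betw_def)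
  qed
  have pt: "\<Psi> (Complex (of_int a / real b + real j / real N) (c / real N ^ 2)) = F (real (u0 + b * h j) / real (b * N))"
    if "j \<in> S" for j
  proof -
    define B' where "B' = int b * int N"
    define A where "A = int u0 + int b * int (h j)"
    have "[aj j * A = -1] (mod B')" using hP[OF that] by (simp add: P_def A_def B'_def)
    hence "B' dvd aj j * A + 1" by (simp add: cong_iff_dvd_diff)
    then obtain t where t: "aj j * A + 1 = B' * t" by (elim dvdE)
    have rel: "A * aj j + (- t) * B' = -1" using t by (simp add: algebra_simps)
    have B'0: "B' > 0" using b N by (simp add: B'_def)
    have y0: "c / real N ^ 2 > 0" using c N by simp
    have e1: "of_int a / real b + real j / real N = of_int (aj j) / of_int B'"
      using b N by (simp add: aj_def B'_def field_simps)
    have e2: "of_int A / of_int B' = real (u0 + b * h j) / real (b * N)" by (simp add: A_def B'_def)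
    have e3: "1 / (of_int B' ^ 2 * (c / real N ^ 2)) = Y" using N b c by (simp add: B'_def Y_def field_simps)
    have "Complex (of_int (aj j) / of_int B') (c / real N ^ 2) \<in> upper" using y0 by (simp add: upper_def)
    hence "\<Psi> (moeb (A, - t, B', - aj j) (Complex (of_int (aj j) / of_int B') (c / real N ^ 2)))
            = \<Psi> (Complex (of_int (aj j) / of_int B') (c / real N ^ 2))"
      using inv inv_point(2)[OF B'0 y0 rel] unfolding gamma_invariant_def by blast
    moreover have "moeb (A, - t, B', - aj j) (Complex (of_int (aj j) / of_int B') (c / real N ^ 2))
       = Complex (of_int A / of_int B') (1 / (of_int B' ^ 2 * (c / real N ^ 2)))"
      by (rule inv_point(1)[OF B'0 y0 rel])
    ultimately show ?thesis using e1 e2 e3 by (simp add: F_def)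
  qed
  have sumeq: "(\<Sum>j\<in>S. \<Psi> (Complex (of_int a / real b + real j / real N) (c / real N ^ 2)))
        = (\<Sum>k\<in>T. F (real (u0 + b * k) / real (b * N)))"
  proof -
    have "(\<Sum>j\<in>S. \<Psi> (Complex (of_int a / real b + real j / real N) (c / real N ^ 2)))
          = (\<Sum>j\<in>S. F (real (u0 + b * h j) / real (b * N)))" by (rule sum.cong) (simp_all add: pt)
    also have "\<dots> = (\<Sum>k\<in>T. F (real (u0 + b * k) / real (b * N)))"
      using sum.reindex_bij_betw[OF bij, of "\<lambda>k. F (real (u0 + b * k) / real (b * N))"] by simp
    finally show ?thesis .
  qed
  have eng: "norm ((\<Sum>k\<in>T. F (real (u0 + b * k) / real (b * N))) - of_nat (totient N) * I)
      \<le> L * 2 ^ card (prime_factors N)"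
    unfolding T_def I_def
    by (rule engine[OF _ _ L _ N b]) (use cont per lip Nb in \<open>simp_all add: F_def Y_def coprime_commute\<close>)
  have tp: "real (totient N) > 0" using N by simp
  have "delta_pr N (of_int a / real b) (c / real N ^ 2) \<Psi> - mu Y \<Psi>
        = (1 / of_nat (totient N)) * ((\<Sum>k\<in>T. F (real (u0 + b * k) / real (b * N))) - of_nat (totient N) * I)"
    using tp unfolding muI delta_pr_def sumeq[symmetric] by (simp add: S_def field_simps)
  hence "norm (delta_pr N (of_int a / real b) (c / real N ^ 2) \<Psi> - mu Y \<Psi>)
        = (1 / real (totient N)) * norm ((\<Sum>k\<in>T. F (real (u0 + b * k) / real (b * N))) - of_nat (totient N) * I)"
    by (simp add: norm_mult norm_divide)
  also have "\<dots> \<le> (1 / real (totient N)) * (L * 2 ^ card (prime_factors N))"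
    using eng tp by (intro mult_left_mono) auto
  finally show ?thesis by (simp add: Y_def)
qed

lemma main_pr:
  fixes a :: int and b :: nat and c :: real
  assumes b: "b \<ge> 1" and ab: "coprime a (int b)" and c: "c > 0" and Psi: "Cc_smooth_M \<Psi>"
  shows "filterlim (\<lambda>N. delta_pr N (of_int a / real b) (c / real N ^ 2) \<Psi>)
           (nhds (mu (1 / (c * real b ^ 2)) \<Psi>)) (inf sequentially (principal {N. coprime N b}))"
proof -
  define Y where "Y = 1 / (c * real b ^ 2)"
  have Y: "Y > 0" using b c by (simp add: Y_def)
  obtain L where L: "L \<ge> 0" "\<forall>s t. \<bar>s - t\<bar> \<le> 1 \<longrightarrow> norm (\<Psi> (Complex s Y) - \<Psi> (Complex t Y)) \<le> L * \<bar>s - t\<bar>"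
    using hline_lip[OF Psi Y] by blast
  have cont: "continuous_on UNIV (\<lambda>t. \<Psi> (Complex t Y))" by (rule hline_cont[OF Psi Y])
  have inv: "gamma_invariant \<Psi>" using Psi by (simp add: Cc_smooth_M_def)
  let ?G = "inf sequentially (principal {N. coprime N b})"
  have ev: "eventually (\<lambda>N. norm (delta_pr N (of_int a / real b) (c / real N ^ 2) \<Psi> - mu Y \<Psi>)
            \<le> L * (2 ^ card (prime_factors N) / real (totient N))) ?G"
    unfolding eventually_inf_principal
    using eventually_gt_at_top[of 0]
  proof eventually_elim
    case (elim N)
    show ?case
    proof
      assume "N \<in> {N. coprime N b}"
      thus "norm (delta_pr N (of_int a / real b) (c / real N ^ 2) \<Psi> - mu Y \<Psi>)
            \<le> L * (2 ^ card (prime_factors N) / real (totient N))"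
        unfolding Y_def
        by (intro main_pr_bound[OF _ ab c inv elim]) (use b L cont in \<open>simp_all add: Y_def\<close>)
    qed
  qed
  have "(\<lambda>N. L * (2 ^ card (prime_factors N) / real (totient N))) \<longlonglongrightarrow> L * 0"
    by (intro tendsto_mult tendsto_const omega_ratio_lim)
  hence lim0: "((\<lambda>N. L * (2 ^ card (prime_factors N) / real (totient N))) \<longlongrightarrow> 0) ?G"
    by (intro tendsto_mono[OF inf_le1]) simp
  have "((\<lambda>N. delta_pr N (of_int a / real b) (c / real N ^ 2) \<Psi> - mu Y \<Psi>) \<longlongrightarrow> 0) ?G"
    by (rule Lim_null_comparison[OF ev lim0])
  hence "((\<lambda>N. delta_pr N (of_int a / real b) (c / real N ^ 2) \<Psi>) \<longlongrightarrow> mu Y \<Psi>) ?G"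
    by (rule LIM_zero_cancel)
  thus ?thesis by (simp add: Y_def)
qed


lemma sum_gcd_divisors:
  fixes f :: "nat \<Rightarrow> complex" and m :: nat
  assumes m: "m > 0"
  shows "(\<Sum>\<beta><m. f (gcd \<beta> m)) = (\<Sum>d\<in>{d. d dvd m}. of_nat (totient (m div d)) * f d)"
proof -
  have "(\<Sum>\<beta><m. f (gcd \<beta> m)) = (\<Sum>\<beta>\<in>{0<..m}. f (gcd \<beta> m))"
  proof -
    have "(\<Sum>\<beta><m. f (gcd \<beta> m)) = f (gcd 0 m) + (\<Sum>\<beta>\<in>{1..<m}. f (gcd \<beta> m))"
      using m by (simp add: lessThan_atLeast0 sum.atLeast_Suc_lessThan)
    also have "\<dots> = (\<Sum>\<beta>\<in>{1..<m}. f (gcd \<beta> m)) + f (gcd m m)" by simp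
    also have "\<dots> = (\<Sum>\<beta>\<in>insert m {1..<m}. f (gcd \<beta> m))" by (simp add: add.commute)
    also have "insert m {1..<m} = {1..m}" using m by auto
    also have "{1..m} = {0<..m}" by auto
    finally show ?thesis .
  qed
  also have "\<dots> = (\<Sum>d\<in>{d. d dvd m}. \<Sum>\<beta>\<in>{x. x \<in> {0<..m} \<and> gcd x m = d}. f (gcd \<beta> m))"
    using m by (intro sum.group[symmetric]) auto
  also have "\<dots> = (\<Sum>d\<in>{d. d dvd m}. of_nat (totient (m div d)) * f d)"
  proof (rule sum.cong[OF refl])
    fix d assume d: "d \<in> {d. d dvd m}"
    have "(\<Sum>\<beta>\<in>{x. x \<in> {0<..m} \<and> gcd x m = d}. f (gcd \<beta> m)) = (\<Sum>\<beta>\<in>{x. x \<in> {0<..m} \<and> gcd x m = d}. f d)"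
      by (rule sum.cong) auto
    also have "\<dots> = of_nat (card {x. x \<in> {0<..m} \<and> gcd x m = d}) * f d" by simp
    also have "card {x. x \<in> {0<..m} \<and> gcd x m = d} = totient (m div d)"
      using card_gcd_eq_totient[OF m, of d] d by simp
    finally show "(\<Sum>\<beta>\<in>{x. x \<in> {0<..m} \<and> gcd x m = d}. f (gcd \<beta> m)) = of_nat (totient (m div d)) * f d" .
  qed
  finally show ?thesis .
qed

lemma sum_gcd_reindex:
  fixes f :: "nat \<Rightarrow> complex" and m :: nat and P Q :: int
  assumes m: "m > 0" and cop: "coprime Q (int m)"
  shows "(\<Sum>\<alpha><m. f (nat (gcd (P + int \<alpha> * Q) (int m)))) = (\<Sum>\<beta><m. f (gcd \<beta> m))"
proof -
  define \<sigma> where "\<sigma> = (\<lambda>\<alpha>::nat. nat ((P + int \<alpha> * Q) mod int m))"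
  have s_int: "int (\<sigma> \<alpha>) = (P + int \<alpha> * Q) mod int m" for \<alpha> using m by (simp add: \<sigma>_def)
  have inj: "inj_on \<sigma> {..<m}"
  proof (rule inj_onI)
    fix \<alpha> \<alpha>' assume a: "\<alpha> \<in> {..<m}" "\<alpha>' \<in> {..<m}" "\<sigma> \<alpha> = \<sigma> \<alpha>'"
    hence "(P + int \<alpha> * Q) mod int m = (P + int \<alpha>' * Q) mod int m" using s_int by metis
    hence "[P + int \<alpha> * Q = P + int \<alpha>' * Q] (mod int m)" by (simp add: cong_def)
    hence "[Q * int \<alpha> = Q * int \<alpha>'] (mod int m)"
      by (simp add: cong_iff_dvd_diff algebra_simps)
    hence "[int \<alpha> = int \<alpha>'] (mod int m)" using cop by (simp add: cong_mult_lcancel)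
    hence "[\<alpha> = \<alpha>'] (mod m)" by (simp add: cong_int_iff)
    thus "\<alpha> = \<alpha>'" using a by (auto intro: cong_less_modulus_unique_nat)
  qed
  have sub: "\<sigma> ` {..<m} \<subseteq> {..<m}"
  proof
    fix x assume "x \<in> \<sigma> ` {..<m}"
    then obtain \<alpha> where "x = \<sigma> \<alpha>" by auto
    hence "int x < int m" using s_int m by simp
    thus "x \<in> {..<m}" by simp
  qed
  have img: "\<sigma> ` {..<m} = {..<m}"
    using card_image[OF inj] sub by (intro card_subset_eq) auto
  have g: "nat (gcd (P + int \<alpha> * Q) (int m)) = gcd (\<sigma> \<alpha>) m" for \<alpha>
  proof -
    have "[(P + int \<alpha> * Q) mod int m = P + int \<alpha> * Q] (mod int m)" by (simp add: cong_def)
    hence "gcd ((P + int \<alpha> * Q) mod int m) (int m) = gcd (P + int \<alpha> * Q) (int m)" by (rule cong_gcd_eq)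
    hence "gcd (int (\<sigma> \<alpha>)) (int m) = gcd (P + int \<alpha> * Q) (int m)" using s_int by simp
    thus ?thesis by (metis gcd_int_int_eq nat_int)
  qed
  have "(\<Sum>\<beta><m. f (gcd \<beta> m)) = (\<Sum>\<beta>\<in>\<sigma> ` {..<m}. f (gcd \<beta> m))" using img by simp
  also have "\<dots> = (\<Sum>\<alpha><m. f (gcd (\<sigma> \<alpha>) m))" by (rule sum.reindex[OF inj, unfolded comp_def])
  finally show ?thesis using g by simp
qed


lemma Nq_coprime:
  fixes q m :: nat
  assumes q: "q \<ge> 1" and m: "m \<ge> 1" and Nq: "gcd (m^2) q dvd m"
  shows "coprime (q div gcd m q) m"
proof (rule ccontr)
  define G where "G = gcd m q"
  define m' where "m' = m div G"
  define q' where "q' = q div G"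
  have G0: "G > 0" using m by (simp add: G_def)
  have mG: "m = G * m'" by (simp add: m'_def G_def)
  have qG: "q = G * q'" by (simp add: q'_def G_def)
  have cmq: "coprime m' q'" unfolding m'_def q'_def G_def using m by (intro div_gcd_coprime) auto
  assume "\<not> coprime (q div gcd m q) m"
  hence "gcd q' m \<noteq> 1" unfolding q'_def G_def using coprime_iff_gcd_eq_1 by blast
  from prime_factor_nat[OF this] obtain r where r: "prime r" "r dvd gcd q' m" by blast
  hence rq: "r dvd q'" and rm: "r dvd m" by simp_all
  have "\<not> r dvd m'"
  proof
    assume "r dvd m'"
    hence "is_unit r" using cmq rq by (meson coprime_common_divisor)
    thus False using r(1) by (simp add: not_prime_unit)
  qed
  hence rG: "r dvd G" using rm r(1) mG by (metis prime_dvd_mult_iff)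
  have "G * r dvd q" using rq qG by simp
  moreover have "G * r dvd m^2"
  proof -
    have "G * r dvd G * G" using rG by simp
    moreover have "G * G dvd m^2" using mG by (simp add: power2_eq_square)
    ultimately show ?thesis by (rule dvd_trans)
  qed
  ultimately have "G * r dvd gcd (m^2) q" by simp
  hence "G * r dvd G * m'" using Nq mG by (metis dvd_trans)
  hence "r dvd m'" using G0 by simp
  with \<open>\<not> r dvd m'\<close> show False by contradiction
qed

lemma gcd_struct:
  fixes p :: int and q m \<alpha> :: nat
  assumes q: "q \<ge> 1" and m: "m \<ge> 1" and pq: "coprime p (int q)"
  shows "gcd (p * int m + int \<alpha> * int q) (int q * int m)
         = int (gcd m q) * gcd (p * int (m div gcd m q) + int \<alpha> * int (q div gcd m q)) (int m)"
proof -
  define G where "G = gcd m q"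
  define m' where "m' = m div G"
  define q' where "q' = q div G"
  have mG: "m = G * m'" by (simp add: m'_def G_def)
  have qG: "q = G * q'" by (simp add: q'_def G_def)
  have cmq: "coprime m' q'" unfolding m'_def q'_def G_def using m by (intro div_gcd_coprime) auto
  define X where "X = p * int m' + int \<alpha> * int q'"
  have e1: "p * int m + int \<alpha> * int q = int G * X" by (simp add: X_def mG qG algebra_simps)
  have e2: "int q * int m = int G * (int q' * int m)" by (simp add: qG algebra_simps)
  have "gcd (p * int m + int \<alpha> * int q) (int q * int m) = int G * gcd X (int q' * int m)"
    unfolding e1 e2 by (simp add: gcd_mult_distrib_int[symmetric])
  also have "gcd X (int q' * int m) = gcd X (int m)"
  proof (rule gcd_mult_right_left_cancel)
    have "coprime p (int q')" using pq qG by (simp add: coprime_commute)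
    moreover have "coprime (int m') (int q')" using cmq by simp
    ultimately have cc: "coprime (p * int m') (int q')" by simp
    have cg: "[p * int m' = X] (mod int q')" by (simp add: X_def cong_iff_dvd_diff)
    show "coprime X (int q')" by (rule cong_imp_coprime[OF cg cc])
  qed
  finally show ?thesis by (simp add: X_def G_def m'_def q'_def)
qed


lemma crt_sum:
  fixes G :: "real \<Rightarrow> complex" and m l :: nat
  assumes per: "\<And>t. G (t + 1) = G t" and m: "m > 0" and l: "l > 0" and cop: "coprime m l"
  shows "(\<Sum>j<m*l. G (real j / real (m*l))) = (\<Sum>\<alpha><m. \<Sum>\<beta><l. G (real \<alpha> / real m + real \<beta> / real l))"
proof -
  define \<phi> where "\<phi> = (\<lambda>(\<alpha>,\<beta>). (\<alpha> * l + \<beta> * m) mod (m * l))"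
  have modm: "\<phi> (\<alpha>,\<beta>) mod m = (\<alpha> * l) mod m" for \<alpha> \<beta>
    by (simp add: \<phi>_def mod_mod_cancel)
  have modl: "\<phi> (\<alpha>,\<beta>) mod l = (\<beta> * m) mod l" for \<alpha> \<beta>
    by (simp add: \<phi>_def mod_mod_cancel)
  have inj: "inj_on \<phi> ({..<m} \<times> {..<l})"
  proof (rule inj_onI, clarify)
    fix \<alpha> \<beta> \<alpha>' \<beta>' assume a: "\<alpha> < m" "\<beta> < l" "\<alpha>' < m" "\<beta>' < l" "\<phi> (\<alpha>,\<beta>) = \<phi> (\<alpha>',\<beta>')"
    have "(\<alpha> * l) mod m = (\<alpha>' * l) mod m" using modm[of \<alpha> \<beta>] modm[of \<alpha>' \<beta>'] a(5) by simp
    hence "[\<alpha> * l = \<alpha>' * l] (mod m)" by (simp add: cong_def)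
    hence "[\<alpha> = \<alpha>'] (mod m)" using cop by (simp add: cong_mult_rcancel_nat coprime_commute)
    hence 1: "\<alpha> = \<alpha>'" using a by (auto intro: cong_less_modulus_unique_nat)
    have "(\<beta> * m) mod l = (\<beta>' * m) mod l" using modl[of \<alpha> \<beta>] modl[of \<alpha>' \<beta>'] a(5) by simp
    hence "[\<beta> * m = \<beta>' * m] (mod l)" by (simp add: cong_def)
    hence "[\<beta> = \<beta>'] (mod l)" using cop by (simp add: cong_mult_rcancel_nat)
    hence 2: "\<beta> = \<beta>'" using a by (auto intro: cong_less_modulus_unique_nat)
    show "\<alpha> = \<alpha>' \<and> \<beta> = \<beta>'" using 1 2 by simp
  qed
  have sub: "\<phi> ` ({..<m} \<times> {..<l}) \<subseteq> {..<m*l}"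
    using m l by (auto simp: \<phi>_def)
  have img: "\<phi> ` ({..<m} \<times> {..<l}) = {..<m*l}"
    using card_image[OF inj] sub by (intro card_subset_eq) (auto simp: card_cartesian_product)
  have val: "G (real (\<phi> (\<alpha>,\<beta>)) / real (m*l)) = G (real \<alpha> / real m + real \<beta> / real l)" for \<alpha> \<beta>
  proof -
    define X where "X = \<alpha> * l + \<beta> * m"
    have "X = \<phi> (\<alpha>,\<beta>) + (m*l) * (X div (m*l))" by (simp add: \<phi>_def X_def)
    hence "real X / real (m*l) = real (\<phi> (\<alpha>,\<beta>)) / real (m*l) + of_int (int (X div (m*l)))"
      using m l by (simp add: field_simps) (metis of_nat_add of_nat_mult)
    moreover have "real \<alpha> / real m + real \<beta> / real l = real X / real (m*l)"
      using m l by (simp add: X_def field_simps)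
    ultimately have "real \<alpha> / real m + real \<beta> / real l = real (\<phi> (\<alpha>,\<beta>)) / real (m*l) + of_int (int (X div (m*l)))"
      by simp
    moreover have "G (real (\<phi> (\<alpha>,\<beta>)) / real (m*l) + of_int (int (X div (m*l)))) = G (real (\<phi> (\<alpha>,\<beta>)) / real (m*l))"
      by (rule per_int[of G, OF per])
    ultimately show ?thesis by simp
  qed
  have "(\<Sum>j<m*l. G (real j / real (m*l))) = (\<Sum>j\<in>\<phi> ` ({..<m} \<times> {..<l}). G (real j / real (m*l)))"
    using img by simp
  also have "\<dots> = (\<Sum>x\<in>{..<m} \<times> {..<l}. G (real (\<phi> x) / real (m*l)))"
    by (rule sum.reindex[OF inj, unfolded comp_def])
  also have "\<dots> = (\<Sum>x\<in>{..<m} \<times> {..<l}. G (real (fst x) / real m + real (snd x) / real l))"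
  proof (rule sum.cong[OF refl])
    fix x :: "nat \<times> nat"
    show "G (real (\<phi> x) / real (m*l)) = G (real (fst x) / real m + real (snd x) / real l)"
      using val[of "fst x" "snd x"] by simp
  qed
  also have "\<dots> = (\<Sum>\<alpha><m. \<Sum>\<beta><l. G (real \<alpha> / real m + real \<beta> / real l))"
    by (simp add: sum.cartesian_product split_beta)
  finally show ?thesis .
qed

lemma prime_split:
  fixes f :: "nat \<Rightarrow> complex" and l :: nat
  assumes l: "prime l"
  shows "(1 / of_nat l) * (\<Sum>\<beta><l. f \<beta>) = (1 / of_nat l) * f 0 +
     (of_nat (l - 1) / of_nat l) * ((1 / of_nat (totient l)) * (\<Sum>j\<in>{j. j < l \<and> coprime j l}. f j))"
proof -
  have l2: "l \<ge> 2" using prime_ge_2_nat[OF l] .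
  have set: "{j. j < l \<and> coprime j l} = {..<l} - {0}"
  proof (intro equalityI subsetI)
    fix j assume "j \<in> {j. j < l \<and> coprime j l}"
    hence "j < l" "coprime j l" by auto
    moreover have "j \<noteq> 0"
    proof
      assume "j = 0" with \<open>coprime j l\<close> have "l = 1" by simp
      with l2 show False by simp
    qed
    ultimately show "j \<in> {..<l} - {0}" by simp
  next
    fix j assume "j \<in> {..<l} - {0}"
    hence j: "0 < j" "j < l" by auto
    have "\<not> l dvd j" using j by (auto dest: dvd_imp_le)
    hence "coprime l j" using l by (simp add: prime_imp_coprime)
    thus "j \<in> {j. j < l \<and> coprime j l}" using j by (simp add: coprime_commute)
  qed
  have tot: "totient l = l - 1" using l by (rule totient_prime)
  have sum: "(\<Sum>\<beta><l. f \<beta>) = f 0 + (\<Sum>j\<in>{..<l} - {0}. f j)"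
    using l2 by (subst sum.remove[of _ 0]) auto
  have l1: "(of_nat (l - 1) :: complex) \<noteq> 0" using l2 by simp
  show ?thesis unfolding set tot sum using l1 l2 by (simp add: field_simps)
qed


lemma delta_decomp:
  fixes m l :: nat and x y :: real
  assumes m: "m > 0" and l: "prime l" and cop: "coprime m l" and inv: "gamma_invariant \<Psi>" and y: "y > 0"
  shows "delta (m*l) x y \<Psi> = (1 / of_nat m) * (\<Sum>\<alpha><m. (1 / of_nat l) * \<Psi> (Complex (x + real \<alpha> / real m) y)
            + (of_nat (l - 1) / of_nat l) * delta_pr l (x + real \<alpha> / real m) y \<Psi>)"
proof -
  have l0: "l > 0" using prime_gt_0_nat[OF l] .
  define G where "G = (\<lambda>t. \<Psi> (Complex (x + t) y))"
  have per: "G (t + 1) = G t" for t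
    using Psi_trans[OF inv y, of "x + t" 1] by (simp add: G_def add.assoc)
  have "delta (m*l) x y \<Psi> = (1 / of_nat (m*l)) * (\<Sum>j<m*l. G (real j / real (m*l)))"
    by (simp add: delta_def G_def)
  also have "(\<Sum>j<m*l. G (real j / real (m*l))) = (\<Sum>\<alpha><m. \<Sum>\<beta><l. G (real \<alpha> / real m + real \<beta> / real l))"
    by (rule crt_sum[where G=G, OF per m l0 cop])
  also have "(1 / of_nat (m*l)) * \<dots> = (1 / of_nat m) * (\<Sum>\<alpha><m. (1 / of_nat l) * (\<Sum>\<beta><l. \<Psi> (Complex ((x + real \<alpha> / real m) + real \<beta> / real l) y)))"
    by (simp add: sum_distrib_left G_def add.assoc)
  also have "\<dots> = (1 / of_nat m) * (\<Sum>\<alpha><m. (1 / of_nat l) * \<Psi> (Complex (x + real \<alpha> / real m) y)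
            + (of_nat (l - 1) / of_nat l) * delta_pr l (x + real \<alpha> / real m) y \<Psi>)"
  proof -
    have "(1 / of_nat l) * (\<Sum>\<beta><l. \<Psi> (Complex ((x + real \<alpha> / real m) + real \<beta> / real l) y))
        = (1 / of_nat l) * \<Psi> (Complex (x + real \<alpha> / real m) y)
            + (of_nat (l - 1) / of_nat l) * delta_pr l (x + real \<alpha> / real m) y \<Psi>" for \<alpha>
      using prime_split[OF l, of "\<lambda>\<beta>. \<Psi> (Complex ((x + real \<alpha> / real m) + real \<beta> / real l) y)"]
      by (simp add: delta_pr_def)
    thus ?thesis by simp
  qed
  finally show ?thesis .
qed

lemma Pm_decomp:
  assumes m: "m > 0" and n: "n \<in> Pm m"
  shows "prime (n div m) \<and> n = m * (n div m) \<and> coprime m (n div m)"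
proof -
  obtain l where l: "n = m * l" "prime l" "\<not> l dvd m" using n by (auto simp: Pm_def)
  have "n div m = l" using l m by simp
  moreover have "coprime m l" using l by (simp add: prime_imp_coprime coprime_commute)
  ultimately show ?thesis using l by simp
qed

lemma divm_filter:
  fixes m B :: nat
  assumes m: "m > 0"
  shows "filterlim (\<lambda>n. n div m) (inf sequentially (principal {l. prime l \<and> B < l})) (inf sequentially (principal (Pm m)))"
proof (unfold filterlim_inf, intro conjI)
  show "filterlim (\<lambda>n. n div m) sequentially (inf sequentially (principal (Pm m)))"
  proof (rule filterlim_mono[OF _ order.refl inf_le1])
    show "filterlim (\<lambda>n. n div m) sequentially sequentially"
      unfolding filterlim_at_top
    proof
      fix Z :: nat
      show "\<forall>\<^sub>F n in sequentially. Z \<le> n div m"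
        using eventually_ge_at_top[of "Z * m"]
      proof eventually_elim
        case (elim n)
        have "Z * m div m \<le> n div m" using elim by (rule div_le_mono)
        thus ?case using m by simp
      qed
    qed
  qed
  show "filterlim (\<lambda>n. n div m) (principal {l. prime l \<and> B < l}) (inf sequentially (principal (Pm m)))"
    unfolding filterlim_principal eventually_inf_principal
    using eventually_ge_at_top[of "m * (B + 1)"]
  proof eventually_elim
    case (elim n)
    show ?case
    proof
      assume n: "n \<in> Pm m"
      have d: "prime (n div m)" "n = m * (n div m)" using Pm_decomp[OF m n] by auto
      have "m * (B + 1) \<le> m * (n div m)" using elim d(2) by simp
      hence "0 < m \<longrightarrow> B + 1 \<le> n div m" by (simp only: mult_le_cancel1)
      hence "B + 1 \<le> n div m" using m by blast
      thus "n div m \<in> {l. prime l \<and> B < l}" using d by simp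
    qed
  qed
qed


lemma final_value:
  fixes p :: int and q m :: nat and c :: real
  assumes q: "q \<ge> 1" and m: "m \<ge> 1" and pq: "coprime p (int q)" and Nq: "gcd (m^2) q dvd m"
  shows "(1 / of_nat m) * (\<Sum>\<alpha><m. mu ((real_of_int (gcd (p * int m + int \<alpha> * int q) (int q * int m)))^2 / (c * real q^2)) \<Psi>)
         = nu m (real (gcd m q) ^ 2 / (c * real q ^ 2)) \<Psi>"
proof -
  define G where "G = gcd m q"
  define P where "P = p * int (m div G)"
  define Q where "Q = int (q div G)"
  define f where "f = (\<lambda>d::nat. mu ((real G * real d)^2 / (c * real q^2)) \<Psi>)"
  have copQ: "coprime Q (int m)" using Nq_coprime[OF q m Nq] by (simp add: Q_def G_def)
  have termeq: "mu ((real_of_int (gcd (p * int m + int \<alpha> * int q) (int q * int m)))^2 / (c * real q^2)) \<Psi>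
        = f (nat (gcd (P + int \<alpha> * Q) (int m)))" for \<alpha>
  proof -
    have "gcd (p * int m + int \<alpha> * int q) (int q * int m) = int G * gcd (P + int \<alpha> * Q) (int m)"
      using gcd_struct[OF q m pq, of \<alpha>] by (simp add: G_def P_def Q_def)
    hence "real_of_int (gcd (p * int m + int \<alpha> * int q) (int q * int m)) = real G * real (nat (gcd (P + int \<alpha> * Q) (int m)))"
      by simp
    thus ?thesis by (simp add: f_def)
  qed
  have "(\<Sum>\<alpha><m. mu ((real_of_int (gcd (p * int m + int \<alpha> * int q) (int q * int m)))^2 / (c * real q^2)) \<Psi>)
      = (\<Sum>\<alpha><m. f (nat (gcd (P + int \<alpha> * Q) (int m))))" using termeq by simp
  also have "\<dots> = (\<Sum>\<beta><m. f (gcd \<beta> m))" using m copQ by (intro sum_gcd_reindex) auto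
  also have "\<dots> = (\<Sum>d\<in>{d. d dvd m}. of_nat (totient (m div d)) * f d)" using m by (intro sum_gcd_divisors) auto
  also have "\<dots> = (\<Sum>d\<in>{d. d dvd m}. of_nat (totient (m div d)) * mu (real d ^ 2 * (real (gcd m q) ^ 2 / (c * real q ^ 2))) \<Psi>)"
    by (rule sum.cong) (simp_all add: f_def G_def power_mult_distrib mult.commute)
  finally show ?thesis by (simp add: nu_def)
qed


lemma part1b:
  fixes p :: int and q m :: nat and c :: real
  assumes q: "q \<ge> 1" and pq: "coprime p (int q)" and c: "c > 0" and Psi: "Cc_smooth_M \<Psi>" and mN: "m \<in> Nq q"
  shows "filterlim (\<lambda>n. delta n (real_of_int p / real q) (c / real n ^ 2) \<Psi>)
            (nhds (nu m (real (gcd m q) ^ 2 / (c * real q ^ 2)) \<Psi>)) (inf sequentially (principal (Pm m)))"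
proof -
  have m: "m \<ge> 1" and Nq: "gcd (m^2) q dvd m" using mN by (auto simp: Nq_def)
  have m0: "m > 0" using m by simp
  define x where "x = real_of_int p / real q"
  define Gm where "Gm = inf sequentially (principal (Pm m))"
  have inv: "gamma_invariant \<Psi>" using Psi by (simp add: Cc_smooth_M_def)
  obtain B where B: "B \<ge> 0" "\<forall>z\<in>upper. norm (\<Psi> z) \<le> B" using Psi_bdd[OF Psi] by blast
  define gg where "gg = (\<lambda>\<alpha>::nat. gcd (p * int m + int \<alpha> * int q) (int q * int m))"
  have qm0: "int q * int m > 0" using q m by simp
  have gpos: "gg \<alpha> > 0" for \<alpha> using q m by (simp add: gg_def)
  define aa where "aa = (\<lambda>\<alpha>. (p * int m + int \<alpha> * int q) div gg \<alpha>)"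
  define bi where "bi = (\<lambda>\<alpha>. (int q * int m) div gg \<alpha>)"
  define bb where "bb = (\<lambda>\<alpha>. nat (bi \<alpha>))"
  have bi_mult: "bi \<alpha> * gg \<alpha> = int q * int m" for \<alpha> by (simp add: bi_def gg_def)
  have aa_mult: "aa \<alpha> * gg \<alpha> = p * int m + int \<alpha> * int q" for \<alpha> by (simp add: aa_def gg_def)
  have bipos: "bi \<alpha> > 0" for \<alpha>
    using bi_mult[of \<alpha>] gpos[of \<alpha>] qm0 by (metis zero_less_mult_pos2)
  have bbi: "int (bb \<alpha>) = bi \<alpha>" for \<alpha> using bipos[of \<alpha>] by (simp add: bb_def)
  have bb1: "bb \<alpha> \<ge> 1" for \<alpha> using bipos[of \<alpha>] bbi[of \<alpha>] by linarith
  have cop: "coprime (aa \<alpha>) (int (bb \<alpha>))" for \<alpha>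
    unfolding bbi aa_def bi_def gg_def using q m by (intro div_gcd_coprime) auto
  have rat: "real_of_int (aa \<alpha>) / real (bb \<alpha>) = x + real \<alpha> / real m" for \<alpha>
  proof -
    have g: "real_of_int (gg \<alpha>) > 0" using gpos[of \<alpha>] by simp
    have "real_of_int (aa \<alpha>) * real_of_int (gg \<alpha>) = real_of_int p * real m + real \<alpha> * real q"
      using arg_cong[OF aa_mult[of \<alpha>], of real_of_int] by simp
    moreover have "real (bb \<alpha>) * real_of_int (gg \<alpha>) = real q * real m"
      using arg_cong[OF bi_mult[of \<alpha>], of real_of_int] bbi[of \<alpha>] by (metis of_int_mult of_int_of_nat_eq)
    moreover have "real_of_int (aa \<alpha>) / real (bb \<alpha>) = (real_of_int (aa \<alpha>) * real_of_int (gg \<alpha>)) / (real (bb \<alpha>) * real_of_int (gg \<alpha>))"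
      using g by simp
    ultimately have "real_of_int (aa \<alpha>) / real (bb \<alpha>) = (real_of_int p * real m + real \<alpha> * real q) / (real q * real m)"
      by simp
    thus ?thesis using q m by (simp add: x_def field_simps)
  qed
  have Yeq: "1 / (c / real m ^ 2 * real (bb \<alpha>) ^ 2) = (real_of_int (gg \<alpha>))^2 / (c * real q^2)" for \<alpha>
  proof -
    have g: "real_of_int (gg \<alpha>) > 0" using gpos[of \<alpha>] by simp
    have "real (bb \<alpha>) * real_of_int (gg \<alpha>) = real q * real m"
      using arg_cong[OF bi_mult[of \<alpha>], of real_of_int] bbi[of \<alpha>] by (metis of_int_mult of_int_of_nat_eq)
    hence "(real (bb \<alpha>) * real_of_int (gg \<alpha>))^2 = (real q * real m)^2" by simp
    hence e: "real (bb \<alpha>)^2 * real_of_int (gg \<alpha>)^2 = real q^2 * real m^2" by (simp add: power_mult_distrib)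
    have Bp: "real (bb \<alpha>) > 0" using bb1[of \<alpha>] by simp
    have "1 / (c / real m ^ 2 * real (bb \<alpha>) ^ 2) = (real q^2 * real m^2) / (c * real q^2 * real (bb \<alpha>)^2)"
      using q m c Bp by (simp add: field_simps)
    also have "\<dots> = (real (bb \<alpha>)^2 * real_of_int (gg \<alpha>)^2) / (c * real q^2 * real (bb \<alpha>)^2)" using e by simp
    also have "\<dots> = (real_of_int (gg \<alpha>))^2 / (c * real q^2)" using Bp by (simp add: field_simps)
    finally show ?thesis .
  qed
  define lim where "lim = (\<lambda>\<alpha>. mu (1 / (c / real m ^ 2 * real (bb \<alpha>) ^ 2)) \<Psi>)"
  define D where "D = (\<lambda>\<alpha> l. delta_pr l (real_of_int (aa \<alpha>) / real (bb \<alpha>)) ((c / real m ^ 2) / real l ^ 2) \<Psi>)"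
  have c2: "c / real m ^ 2 > 0" using c m by simp
  have limD: "((\<lambda>n. D \<alpha> (n div m)) \<longlongrightarrow> lim \<alpha>) Gm" for \<alpha>
  proof -
    have main: "filterlim (\<lambda>N. D \<alpha> N) (nhds (lim \<alpha>)) (inf sequentially (principal {N. coprime N (bb \<alpha>)}))"
      unfolding D_def lim_def using main_pr[OF bb1 cop c2 Psi] by simp
    have sub: "inf sequentially (principal {l. prime l \<and> bb \<alpha> < l}) \<le> inf sequentially (principal {N. coprime N (bb \<alpha>)})"
    proof (rule inf_mono[OF order.refl], unfold principal_le_iff, rule subsetI)
      fix l assume "l \<in> {l. prime l \<and> bb \<alpha> < l}"
      hence l: "prime l" "bb \<alpha> < l" by auto
      have "\<not> l dvd bb \<alpha>" using l bb1[of \<alpha>] by (auto dest: dvd_imp_le)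
      hence "coprime l (bb \<alpha>)" using l(1) by (simp add: prime_imp_coprime)
      thus "l \<in> {N. coprime N (bb \<alpha>)}" by simp
    qed
    have "filterlim (\<lambda>N. D \<alpha> N) (nhds (lim \<alpha>)) (inf sequentially (principal {l. prime l \<and> bb \<alpha> < l}))"
      by (rule tendsto_mono[OF sub main])
    from filterlim_compose[OF this divm_filter[OF m0, of "bb \<alpha>"]] show ?thesis by (simp add: Gm_def)
  qed
  have divseq: "filterlim (\<lambda>n. n div m) sequentially Gm"
    using filterlim_mono[OF divm_filter[OF m0, of 0] inf_le1 order.refl] by (simp add: Gm_def)
  have inv0: "((\<lambda>n. 1 / real (n div m)) \<longlongrightarrow> 0) Gm"
    using filterlim_compose[OF lim_inverse_n' divseq] by (simp add: inverse_eq_divide)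
  have lim1: "((\<lambda>n. of_nat (n div m - 1) / of_nat (n div m) :: complex) \<longlongrightarrow> 1) Gm"
  proof -
    have "((\<lambda>n. 1 - of_real (1 / real (n div m)) :: complex) \<longlongrightarrow> 1 - of_real 0) Gm"
      by (intro tendsto_intros inv0)
    moreover have "\<forall>\<^sub>F n in Gm. 1 - of_real (1 / real (n div m)) = (of_nat (n div m - 1) / of_nat (n div m) :: complex)"
      using filterlim_at_top[THEN iffD1, OF divseq, rule_format, of 1]
    proof eventually_elim
      case (elim n)
      thus ?case by (simp add: of_nat_diff field_simps)
    qed
    ultimately show ?thesis by (simp add: tendsto_cong)
  qed
  have lim0: "((\<lambda>n. (1 / of_nat (n div m)) * \<Psi> (Complex (x + real \<alpha> / real m) (c / real n ^ 2))) \<longlongrightarrow> 0) Gm" for \<alpha>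
  proof (rule Lim_null_comparison)
    show "\<forall>\<^sub>F n in Gm. norm ((1 / of_nat (n div m)) * \<Psi> (Complex (x + real \<alpha> / real m) (c / real n ^ 2))) \<le> B * (1 / real (n div m))"
      unfolding Gm_def eventually_inf_principal using eventually_gt_at_top[of 0]
    proof eventually_elim
      case (elim n)
      have z: "Complex (x + real \<alpha> / real m) (c / real n ^ 2) \<in> upper" using elim c by (simp add: upper_def)
      have "norm ((1 / of_nat (n div m)) * \<Psi> (Complex (x + real \<alpha> / real m) (c / real n ^ 2)))
          = (1 / real (n div m)) * norm (\<Psi> (Complex (x + real \<alpha> / real m) (c / real n ^ 2)))"
        by (simp add: norm_mult norm_divide)
      also have "\<dots> \<le> (1 / real (n div m)) * B" using B z by (intro mult_left_mono) auto
      finally show ?case by (simp add: mult.commute)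
    qed
    show "((\<lambda>n. B * (1 / real (n div m))) \<longlongrightarrow> 0) Gm"
      using tendsto_mult[OF tendsto_const inv0, of B] by simp
  qed
  define E where "E = (\<lambda>n. (1 / of_nat m) * (\<Sum>\<alpha><m. (1 / of_nat (n div m)) * \<Psi> (Complex (x + real \<alpha> / real m) (c / real n ^ 2))
            + (of_nat (n div m - 1) / of_nat (n div m)) * D \<alpha> (n div m)))"
  have limE: "(E \<longlongrightarrow> (1 / of_nat m) * (\<Sum>\<alpha><m. 0 + 1 * lim \<alpha>)) Gm"
    unfolding E_def by (intro tendsto_mult tendsto_const tendsto_sum tendsto_add lim0 lim1 limD)
  have evE: "\<forall>\<^sub>F n in Gm. delta n x (c / real n ^ 2) \<Psi> = E n"
    unfolding Gm_def eventually_inf_principal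
  proof (intro always_eventually allI impI)
    fix n assume n: "n \<in> Pm m"
    define l where "l = n div m"
    have d: "prime l" "n = m * l" "coprime m l" using Pm_decomp[OF m0 n] by (auto simp: l_def)
    have n0: "n > 0" using d m0 prime_gt_0_nat[OF d(1)] by simp
    have y: "c / real n ^ 2 > 0" using c n0 by simp
    have "delta n x (c / real n ^ 2) \<Psi> = delta (m * l) x (c / real n ^ 2) \<Psi>" using d by simp
    also have "\<dots> = (1 / of_nat m) * (\<Sum>\<alpha><m. (1 / of_nat l) * \<Psi> (Complex (x + real \<alpha> / real m) (c / real n ^ 2))
            + (of_nat (l - 1) / of_nat l) * delta_pr l (x + real \<alpha> / real m) (c / real n ^ 2) \<Psi>)"
      by (rule delta_decomp[OF m0 d(1) d(3) inv y])
    also have "\<dots> = E n"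
    proof -
      have "delta_pr l (x + real \<alpha> / real m) (c / real n ^ 2) \<Psi> = D \<alpha> l" for \<alpha>
      proof -
        have "c / real n ^ 2 = (c / real m ^ 2) / real l ^ 2" using d(2) by (simp add: power_mult_distrib)
        moreover have "x + real \<alpha> / real m = real_of_int (aa \<alpha>) / real (bb \<alpha>)" by (simp add: rat)
        ultimately show ?thesis unfolding D_def by (simp only:)
      qed
      thus ?thesis by (simp add: E_def l_def)
    qed
    finally show "delta n x (c / real n ^ 2) \<Psi> = E n" .
  qed
  have "((\<lambda>n. delta n x (c / real n ^ 2) \<Psi>) \<longlongrightarrow> (1 / of_nat m) * (\<Sum>\<alpha><m. 0 + 1 * lim \<alpha>)) Gm"
    using limE evE by (simp add: tendsto_cong)
  moreover have "(1 / of_nat m) * (\<Sum>\<alpha><m. 0 + 1 * lim \<alpha>) = nu m (real (gcd m q) ^ 2 / (c * real q ^ 2)) \<Psi>"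
  proof -
    have "lim \<alpha> = mu ((real_of_int (gcd (p * int m + int \<alpha> * int q) (int q * int m)))^2 / (c * real q^2)) \<Psi>" for \<alpha>
      unfolding lim_def Yeq gg_def ..
    hence "(\<Sum>\<alpha><m. 0 + 1 * lim \<alpha>) = (\<Sum>\<alpha><m. mu ((real_of_int (gcd (p * int m + int \<alpha> * int q) (int q * int m)))^2 / (c * real q^2)) \<Psi>)"
      by simp
    thus ?thesis using final_value[OF q m pq Nq, of c \<Psi>] by simp
  qed
  ultimately show ?thesis by (simp add: x_def Gm_def)
qed


theorem theorem1p3:
  fixes p :: int and q :: nat
  assumes "q \<ge> 1" and "coprime p (int q)"
  defines "x \<equiv> real_of_int p / real q"
  shows "(\<forall>c::real. c > 0 \<longrightarrow> (\<forall>\<Psi>. Cc_smooth_M \<Psi> \<longrightarrow>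
            filterlim (\<lambda>n. delta_pr n x (c / real n ^ 2) \<Psi>)
               (nhds (mu (1 / (c * real q ^ 2)) \<Psi>))
               (inf sequentially (principal {n. coprime n q})) \<and>
            (\<forall>m \<in> Nq q.
               filterlim (\<lambda>n. delta n x (c / real n ^ 2) \<Psi>)
                 (nhds (nu m (real (gcd m q) ^ 2 / (c * real q ^ 2)) \<Psi>))
                 (inf sequentially (principal (Pm m))))))
       \<and> (\<forall>y :: nat \<Rightarrow> real. (\<forall>n\<ge>1. y n > 0) \<longrightarrow>
            ((\<lambda>n. real n ^ 2 * y n) \<longlonglongrightarrow> 0) \<longrightarrow>
            escapes_to_cusp (\<lambda>n. Rn n x (y n)) \<and> escapes_to_cusp (\<lambda>n. Rn_pr n x (y n)))"
proof (intro conjI allI impI ballI)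
  fix c :: real and \<Psi> assume c: "c > 0" and Psi: "Cc_smooth_M \<Psi>"
  show "filterlim (\<lambda>n. delta_pr n x (c / real n ^ 2) \<Psi>) (nhds (mu (1 / (c * real q ^ 2)) \<Psi>))
          (inf sequentially (principal {n. coprime n q}))"
    unfolding x_def by (rule main_pr[OF assms(1,2) c Psi])
  fix m assume m: "m \<in> Nq q"
  show "filterlim (\<lambda>n. delta n x (c / real n ^ 2) \<Psi>) (nhds (nu m (real (gcd m q) ^ 2 / (c * real q ^ 2)) \<Psi>))
          (inf sequentially (principal (Pm m)))"
    unfolding x_def by (rule part1b[OF assms(1,2) c Psi m])
next
  fix y :: "nat \<Rightarrow> real"
  assume y: "\<forall>n\<ge>1. y n > 0" and lim: "(\<lambda>n. real n ^ 2 * y n) \<longlonglongrightarrow> 0"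
  have e: "escapes_to_cusp (\<lambda>n. Rn n x (y n))" unfolding x_def by (rule escape_Rn[OF assms(1) y lim])
  show "escapes_to_cusp (\<lambda>n. Rn n x (y n))" by (rule e)
  show "escapes_to_cusp (\<lambda>n. Rn_pr n x (y n))" by (rule escape_Rn_pr[OF e])
qed

end
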